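(* Suppose $\Upsilon=E[\partial\psi(W,\theta_0,\eta_0,\boldsymbol\kappa_0)/\partial\theta]$ exists and there is a neighborhood $\mathcal N$ of $\theta_0$ such that for all folds $\ell$: (i) $\|\hat\eta_\ell-\eta_0\|_\Xi\int\|\hat{\boldsymbol\kappa}_\ell(z)-\boldsymbol\kappa_0(z)\|_\infty^2F_0(dz)\to_p0$; (ii) whenever $\|\eta-\eta_0\|_\Xi E[\|\boldsymbol\kappa(Z)-\boldsymbol\kappa_0(Z)\|_\infty^2]$ is small enough, $\psi(W,\theta,\eta,\boldsymbol\kappa)$ is differentiable in $\theta$ on $\mathcal N$ and there are $C_1>0$, $C_2>0$ and $d(W,\eta,\boldsymbol\kappa)$ such that for $\theta\in\mathcal N$, $\|\partial_\theta\psi(W,\theta,\eta,\boldsymbol\kappa)-\partial_\theta\psi(W,\theta_0,\eta,\boldsymbol\kappa)\|\le d(W,\eta,\boldsymbol\kappa)\|\theta-\theta_0\|^{C_1}$ and $E[d(W,\eta,\boldsymbol\kappa)]<C_2$; (iii) for each $s$ and $k$, $\int|\partial\psi_s(w,\theta_0,\hat\eta_\ell,\hat{\boldsymbol\kappa}_\ell)/\partial\theta_k-\partial\psi_s(w,\theta_0,\eta_0,\boldsymbol\kappa_0)/\partial\theta_k|F_0(dw)\to_p0$. Let $\bar\theta\to_p\theta_0$. Then $\partial\hat\psi(\bar\theta)/\partial\theta\to_p\Upsilon$.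
   Context: $W_i=(Y_i,V_i,Z_i)$, $i=1,\dots,n$, i.i.d. copies of $W=(Y,V,Z)\sim F_0$; $Z_1,\dots,Z_J$ are conditioning sub-vectors of $Z$; $\theta\in\Theta\subset\mathbb R^{d_\theta}$ with true value $\theta_0$; $\eta\in\Xi$ (functions of $V$, norm $\|\cdot\|_\Xi$) with true value $\eta_0$; residual functions $m_j(Y,\theta,\eta)$. $\boldsymbol\kappa_j(Z_j)\in\mathbb R^q$ are vectors of instrumental functions, $\boldsymbol\kappa(Z)$ the $q\times J$ matrix collecting them ($\boldsymbol\kappa_0$ the true one), and $\|\cdot\|_\infty$ the maximal absolute entry. $\psi(W,\theta,\eta,\boldsymbol\kappa)=\sum_{j=1}^Jm_j(Y,\theta,\eta)\boldsymbol\kappa_j(Z_j)$ with components $\psi_s$. The sample is split into folds $I_1,\dots,I_L$; $\hat\eta_\ell,\hat{\boldsymbol\kappa}_\ell$ are computed from observations outside $I_\ell$; $\hat\psi(\theta)=\frac1n\sum_{\ell=1}^L\sum_{i\in I_\ell}\psi(W_i,\theta,\hat\eta_\ell,\hat{\boldsymbol\kappa}_\ell)$. *)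

theory Defs
  imports "HOL-Analysis.Analysis" "HOL-Probability.Probability"
begin

text \<open>For measurable X n this is ordinary convergence in probability.\<close>
definition conv_prob :: "'a measure \<Rightarrow> (nat \<Rightarrow> 'a \<Rightarrow> 'b::metric_space) \<Rightarrow> 'b \<Rightarrow> bool" where
  "conv_prob M X c \<longleftrightarrow>
     (\<forall>\<epsilon>>0. \<forall>\<delta>>0. eventually (\<lambda>n. \<exists>A\<in>sets M.
        {\<omega>\<in>space M. dist (X n \<omega>) c > \<epsilon>} \<subseteq> A \<and> measure M A < \<delta>) sequentially)"

definition conv_prob_zero_enn :: "'a measure \<Rightarrow> (nat \<Rightarrow> 'a \<Rightarrow> ennreal) \<Rightarrow> bool" where
  "conv_prob_zero_enn M X \<longleftrightarrow>
     (\<forall>\<epsilon>>0. \<forall>\<delta>>0. eventually (\<lambda>n. \<exists>A\<in>sets M.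
        {\<omega>\<in>space M. X n \<omega> > ennreal \<epsilon>} \<subseteq> A \<and> measure M A < \<delta>) sequentially)"

text \<open>The instrument kappa_j is represented as a function of Z; that it
  only depends on the sub-vector Z_j is imposed by membership in kappa_class.\<close>
definition psi :: "('j::finite \<Rightarrow> 'y \<Rightarrow> 'v \<Rightarrow> real^'d \<Rightarrow> 'e \<Rightarrow> real)
     \<Rightarrow> 'y \<times> 'v \<times> 'z \<Rightarrow> real^'d \<Rightarrow> 'e \<Rightarrow> ('j \<Rightarrow> 'z \<Rightarrow> real^'q) \<Rightarrow> real^'q" where
  "psi m w \<theta> \<eta> \<kappa> = (\<Sum>j\<in>UNIV. m j (fst w) (fst (snd w)) \<theta> \<eta> *\<^sub>R \<kappa> j (snd (snd w)))"

definition kappa_class :: "('j \<Rightarrow> 'z \<Rightarrow> 'u) \<Rightarrow> ('j \<Rightarrow> 'z \<Rightarrow> real^'q) set" where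
  "kappa_class Zsub = {\<kappa>. \<forall>j z z'. Zsub j z = Zsub j z' \<longrightarrow> \<kappa> j z = \<kappa> j z'}"

definition sup_dist :: "('j::finite \<Rightarrow> 'z \<Rightarrow> real^'q) \<Rightarrow> ('j \<Rightarrow> 'z \<Rightarrow> real^'q) \<Rightarrow> 'z \<Rightarrow> real" where
  "sup_dist \<kappa> \<kappa>' z = Max (range (\<lambda>(j, s). \<bar>\<kappa> j z $ s - \<kappa>' j z $ s\<bar>))"

definition kappa_L2 :: "('y \<times> 'v \<times> 'z) measure \<Rightarrow> ('j::finite \<Rightarrow> 'z \<Rightarrow> real^'q) \<Rightarrow> ('j \<Rightarrow> 'z \<Rightarrow> real^'q) \<Rightarrow> ennreal" where
  "kappa_L2 F0 \<kappa> \<kappa>' = (\<integral>\<^sup>+ w. ennreal ((sup_dist \<kappa> \<kappa>' (snd (snd w)))\<^sup>2) \<partial>F0)"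

definition psi_hat :: "('j::finite \<Rightarrow> 'y \<Rightarrow> 'v \<Rightarrow> real^'d \<Rightarrow> 'e \<Rightarrow> real) \<Rightarrow> nat
     \<Rightarrow> (nat \<Rightarrow> nat set) \<Rightarrow> (nat \<Rightarrow> 'y \<times> 'v \<times> 'z) \<Rightarrow> (nat \<Rightarrow> 'e) \<Rightarrow> (nat \<Rightarrow> 'j \<Rightarrow> 'z \<Rightarrow> real^'q)
     \<Rightarrow> nat \<Rightarrow> real^'d \<Rightarrow> real^'q" where
  "psi_hat m L I Ws etas kappas n \<theta> =
     (1 / real n) *\<^sub>R (\<Sum>l<L. \<Sum>i\<in>I l. psi m (Ws i) \<theta> (etas l) (kappas l))"

end

theory Submission
  imports Defs
begin

definition negl :: "'a measure \<Rightarrow> (nat \<Rightarrow> 'a set) \<Rightarrow> bool" where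
  "negl M E \<longleftrightarrow> (\<forall>\<delta>>0. eventually (\<lambda>n. \<exists>A\<in>sets M. E n \<inter> space M \<subseteq> A \<and> measure M A < \<delta>) sequentially)"

lemma neglI_le:
  assumes "\<And>\<delta>. \<delta> > 0 \<Longrightarrow> eventually (\<lambda>n. \<exists>A\<in>sets M. E n \<inter> space M \<subseteq> A \<and> measure M A \<le> \<delta>) sequentially"
  shows "negl M E"
  unfolding negl_def
proof (intro allI impI)
  fix \<delta> :: real assume "\<delta> > 0"
  then have "\<delta>/2 > 0" by simp
  from assms[OF this] show "eventually (\<lambda>n. \<exists>A\<in>sets M. E n \<inter> space M \<subseteq> A \<and> measure M A < \<delta>) sequentially"
  proof (rule eventually_mono)
    fix n assume "\<exists>A\<in>sets M. E n \<inter> space M \<subseteq> A \<and> measure M A \<le> \<delta>/2"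
    then obtain A where "A \<in> sets M" "E n \<inter> space M \<subseteq> A" "measure M A \<le> \<delta>/2" by blast
    moreover have "measure M A < \<delta>" using \<open>\<delta>>0\<close> \<open>measure M A \<le> \<delta>/2\<close> by linarith
    ultimately show "\<exists>A\<in>sets M. E n \<inter> space M \<subseteq> A \<and> measure M A < \<delta>" by blast
  qed
qed

lemma negl_mono:
  assumes "negl M E" "eventually (\<lambda>n. E' n \<inter> space M \<subseteq> E n) sequentially"
  shows "negl M E'"
  unfolding negl_def
proof (intro allI impI)
  fix \<delta> :: real assume "\<delta> > 0"
  with assms(1) have "eventually (\<lambda>n. \<exists>A\<in>sets M. E n \<inter> space M \<subseteq> A \<and> measure M A < \<delta>) sequentially"
    unfolding negl_def by blast
  with assms(2) show "eventually (\<lambda>n. \<exists>A\<in>sets M. E' n \<inter> space M \<subseteq> A \<and> measure M A < \<delta>) sequentially"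
    by eventually_elim blast
qed

lemma negl_Un:
  assumes "finite_measure M" "negl M E" "negl M F"
  shows "negl M (\<lambda>n. E n \<union> F n)"
  unfolding negl_def
proof (intro allI impI)
  fix \<delta> :: real assume "\<delta> > 0"
  then have d2: "\<delta>/2 > 0" by simp
  have 1: "eventually (\<lambda>n. \<exists>A\<in>sets M. E n \<inter> space M \<subseteq> A \<and> measure M A < \<delta>/2) sequentially"
    using assms(2) d2 unfolding negl_def by blast
  have 2: "eventually (\<lambda>n. \<exists>A\<in>sets M. F n \<inter> space M \<subseteq> A \<and> measure M A < \<delta>/2) sequentially"
    using assms(3) d2 unfolding negl_def by blast
  from 1 2 show "eventually (\<lambda>n. \<exists>A\<in>sets M. (E n \<union> F n) \<inter> space M \<subseteq> A \<and> measure M A < \<delta>) sequentially"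
  proof eventually_elim
    case (elim n)
    then obtain A B where AB: "A \<in> sets M" "B \<in> sets M" "E n \<inter> space M \<subseteq> A" "F n \<inter> space M \<subseteq> B"
      "measure M A < \<delta>/2" "measure M B < \<delta>/2" by blast
    have "measure M (A \<union> B) \<le> measure M A + measure M B"
      using AB assms(1) by (intro measure_Un_le) auto
    moreover have "(E n \<union> F n) \<inter> space M \<subseteq> A \<union> B" using AB by blast
    moreover have "A \<union> B \<in> sets M" using AB by blast
    ultimately show ?case using AB(5,6) by (intro bexI[of _ "A \<union> B"] conjI) linarith+
  qed
qed

lemma negl_empty: "negl M (\<lambda>n. {})"
  unfolding negl_def by (auto intro!: always_eventually bexI[of _ "{}"])

lemma negl_UN:
  assumes "finite_measure M" "finite S" "\<And>l. l \<in> S \<Longrightarrow> negl M (E l)"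
  shows "negl M (\<lambda>n. \<Union>l\<in>S. E l n)"
  using assms(2,3)
proof (induction S rule: finite_induct)
  case empty then show ?case by (simp add: negl_empty)
next
  case (insert x F)
  then have "negl M (\<lambda>n. E x n \<union> (\<Union>l\<in>F. E l n))"
    by (intro negl_Un assms(1)) auto
  then show ?case by simp
qed

lemma negl_split:
  assumes "finite_measure M"
  assumes "\<And>\<delta>. \<delta> > 0 \<Longrightarrow> \<exists>F. negl M F \<and> eventually (\<lambda>n. \<exists>A\<in>sets M. E n \<inter> space M \<subseteq> F n \<union> A \<and> measure M A \<le> \<delta>) sequentially"
  shows "negl M E"
  unfolding negl_def
proof (intro allI impI)
  fix \<delta> :: real assume "\<delta> > 0"
  then have d2: "\<delta>/2 > 0" by simp
  from assms(2)[OF d2] obtain F where F: "negl M F"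
    and ev: "eventually (\<lambda>n. \<exists>A\<in>sets M. E n \<inter> space M \<subseteq> F n \<union> A \<and> measure M A \<le> \<delta>/2) sequentially"
    by blast
  have 1: "eventually (\<lambda>n. \<exists>A\<in>sets M. F n \<inter> space M \<subseteq> A \<and> measure M A < \<delta>/2) sequentially"
    using F d2 unfolding negl_def by blast
  from 1 ev show "eventually (\<lambda>n. \<exists>A\<in>sets M. E n \<inter> space M \<subseteq> A \<and> measure M A < \<delta>) sequentially"
  proof eventually_elim
    case (elim n)
    then obtain A B where AB: "A \<in> sets M" "B \<in> sets M" "F n \<inter> space M \<subseteq> A" "E n \<inter> space M \<subseteq> F n \<union> B"
      "measure M A < \<delta>/2" "measure M B \<le> \<delta>/2" by blast
    have "measure M (A \<union> B) \<le> measure M A + measure M B"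
      using AB assms(1) by (intro measure_Un_le) auto
    moreover have "E n \<inter> space M \<subseteq> A \<union> B" using AB by blast
    moreover have "A \<union> B \<in> sets M" using AB by blast
    ultimately show ?case using AB(5,6) by (intro bexI[of _ "A \<union> B"] conjI) linarith+
  qed
qed

lemma conv_prob_negl:
  "conv_prob M X c \<longleftrightarrow> (\<forall>\<epsilon>>0. negl M (\<lambda>n. {\<omega>\<in>space M. dist (X n \<omega>) c > \<epsilon>}))"
proof -
  have "\<And>P. {\<omega>\<in>space M. P \<omega>} \<inter> space M = {\<omega>\<in>space M. P \<omega>}" by blast
  then show ?thesis unfolding conv_prob_def negl_def by presburger
qed

lemma conv_prob_zero_enn_negl:
  "conv_prob_zero_enn M X \<longleftrightarrow> (\<forall>\<epsilon>>0. negl M (\<lambda>n. {\<omega>\<in>space M. X n \<omega> > ennreal \<epsilon>}))"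
proof -
  have "\<And>P. {\<omega>\<in>space M. P \<omega>} \<inter> space M = {\<omega>\<in>space M. P \<omega>}" by blast
  then show ?thesis unfolding conv_prob_zero_enn_def negl_def by presburger
qed

lemma markov_enn:
  assumes "finite_measure M" "U \<in> borel_measurable M" "(c::real) > 0" "(\<integral>\<^sup>+x. U x \<partial>M) \<le> ennreal B" "B \<ge> 0"
  shows "measure M {x\<in>space M. ennreal c \<le> U x} \<le> B / c"
proof -
  let ?S = "{x\<in>space M. ennreal c \<le> U x}"
  have S: "?S \<in> sets M" using assms(2) by measurable
  have "ennreal c * emeasure M ?S = (\<integral>\<^sup>+x. ennreal c * indicator ?S x \<partial>M)"
    using S by (simp add: nn_integral_cmult_indicator)
  also have "\<dots> \<le> (\<integral>\<^sup>+x. U x \<partial>M)"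
    by (intro nn_integral_mono) (auto simp: indicator_def)
  also have "\<dots> \<le> ennreal B" by fact
  finally have "ennreal c * ennreal (measure M ?S) \<le> ennreal B"
    using assms(1) by (simp add: finite_measure.emeasure_eq_measure)
  then have "c * measure M ?S \<le> B"
    using assms(3,5) by (simp add: ennreal_mult[symmetric])
  then show ?thesis using assms(3) by (simp add: field_simps)
qed

lemma indep_key:
  fixes W :: "nat \<Rightarrow> 'a \<Rightarrow> 'w" and F0 :: "'w measure" and h :: "'w \<Rightarrow> 'x \<Rightarrow> ennreal"
  assumes M: "prob_space M" and F0: "prob_space F0"
    and ind: "prob_space.indep_vars M (\<lambda>_. F0) W UNIV"
    and dist: "\<And>i. distr M F0 (W i) = F0"
    and S: "finite S" "i \<notin> S"
    and g: "g \<in> measurable (PiM S (\<lambda>_. F0)) X"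
    and h: "(\<lambda>(w,x). h w x) \<in> borel_measurable (F0 \<Otimes>\<^sub>M X)"
  shows "(\<integral>\<^sup>+\<omega>. h (W i \<omega>) (g (\<lambda>j\<in>S. W j \<omega>)) \<partial>M) = (\<integral>\<^sup>+\<omega>. (\<integral>\<^sup>+w. h w (g (\<lambda>j\<in>S. W j \<omega>)) \<partial>F0) \<partial>M)"
proof -
  interpret M: prob_space M by (rule M)
  interpret F: prob_space F0 by (rule F0)
  interpret P: product_prob_space "\<lambda>_::nat. F0" by (rule product_prob_spaceI) (rule F0)
  define T where "T = insert i S"
  have T: "finite T" "T \<noteq> {}" "S \<subseteq> T" "i \<in> T" using S by (auto simp: T_def)
  have rv: "\<And>j. W j \<in> measurable M F0"
    using ind unfolding M.indep_vars_def by blast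
  have indT: "M.indep_vars (\<lambda>_. F0) W T"
    using M.indep_vars_subset[OF ind] by blast
  have distrT: "distr M (PiM T (\<lambda>_. F0)) (\<lambda>\<omega>. \<lambda>j\<in>T. W j \<omega>) = PiM T (\<lambda>_. F0)"
    using M.indep_vars_iff_distr_eq_PiM[where I=T and X=W and M'="\<lambda>_. F0", OF T(2) rv] indT by (simp add: dist)
  have Ymeas: "(\<lambda>\<omega>. \<lambda>j\<in>T. W j \<omega>) \<in> measurable M (PiM T (\<lambda>_. F0))"
    by (intro measurable_restrict rv)
  have resS: "(\<lambda>x. restrict x S) \<in> measurable (PiM T (\<lambda>_. F0)) (PiM S (\<lambda>_. F0))"
    by (rule measurable_restrict_subset[OF T(3)])
  have gres: "(\<lambda>x. g (restrict x S)) \<in> measurable (PiM T (\<lambda>_. F0)) X"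
    using measurable_comp[OF resS g] by (simp add: comp_def)
  have pairm: "(\<lambda>x. (x i, g (restrict x S))) \<in> measurable (PiM T (\<lambda>_. F0)) (F0 \<Otimes>\<^sub>M X)"
    by (intro measurable_Pair gres measurable_component_singleton T(4))
  have resT: "\<And>\<omega>. restrict (\<lambda>j\<in>T. W j \<omega>) S = (\<lambda>j\<in>S. W j \<omega>)"
    using T(3) by (auto simp: restrict_def fun_eq_iff)
  define Fh where "Fh x = h (x i) (g (restrict x S))" for x
  have Fh_m: "Fh \<in> borel_measurable (PiM T (\<lambda>_. F0))"
    using measurable_comp[OF pairm h] unfolding Fh_def[abs_def] by (simp add: comp_def)
  define q where "q x = (\<integral>\<^sup>+w. h w x \<partial>F0)" for x
  have hswap: "(\<lambda>(x,w). h w x) \<in> borel_measurable (X \<Otimes>\<^sub>M F0)"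
  proof -
    have "(\<lambda>(w,x). h w x) \<circ> (\<lambda>(x,y). (y,x)) \<in> borel_measurable (X \<Otimes>\<^sub>M F0)"
      by (rule measurable_comp[OF measurable_pair_swap' h])
    moreover have "(\<lambda>(w,x). h w x) \<circ> (\<lambda>(x,y). (y,x)) = (\<lambda>(x,w). h w x)"
      by (auto simp: fun_eq_iff)
    ultimately show ?thesis by simp
  qed
  have q_m: "q \<in> borel_measurable X"
    unfolding q_def using F.borel_measurable_nn_integral[of "\<lambda>x w. h w x" X] hswap by simp
  define G where "G x = q (g (restrict x S))" for x
  have G_m: "G \<in> borel_measurable (PiM T (\<lambda>_. F0))"
    using measurable_comp[OF gres q_m] unfolding G_def[abs_def] by (simp add: comp_def)
  have "(\<integral>\<^sup>+\<omega>. h (W i \<omega>) (g (\<lambda>j\<in>S. W j \<omega>)) \<partial>M) = (\<integral>\<^sup>+\<omega>. Fh (\<lambda>j\<in>T. W j \<omega>) \<partial>M)"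
    using T by (intro nn_integral_cong) (simp add: Fh_def resT Int_absorb1[OF T(3)])
  also have "\<dots> = (\<integral>\<^sup>+x. Fh x \<partial>distr M (PiM T (\<lambda>_. F0)) (\<lambda>\<omega>. \<lambda>j\<in>T. W j \<omega>))"
    by (rule nn_integral_distr[symmetric, OF Ymeas]) (simp only: distrT Fh_m)
  also have "\<dots> = (\<integral>\<^sup>+x. Fh x \<partial>PiM T (\<lambda>_. F0))" by (simp only: distrT)
  also have "\<dots> = (\<integral>\<^sup>+x. \<integral>\<^sup>+y. Fh (x(i:=y)) \<partial>F0 \<partial>PiM S (\<lambda>_. F0))"
    unfolding T_def by (rule P.product_nn_integral_insert[OF S]) (use Fh_m in \<open>simp add: T_def\<close>)
  also have "\<dots> = (\<integral>\<^sup>+x. q (g x) \<partial>PiM S (\<lambda>_. F0))"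
  proof (intro nn_integral_cong)
    fix x assume "x \<in> space (PiM S (\<lambda>_. F0))"
    then have "restrict x S = x" by (auto simp: space_PiM PiE_def extensional_def restrict_def fun_eq_iff)
    moreover have "restrict (x(i:=y)) S = restrict x S" for y using S(2) by (auto simp: restrict_def fun_eq_iff)
    ultimately show "(\<integral>\<^sup>+y. Fh (x(i:=y)) \<partial>F0) = q (g x)"
      by (simp add: Fh_def q_def)
  qed
  also have "\<dots> = (\<integral>\<^sup>+x. \<integral>\<^sup>+y. G (x(i:=y)) \<partial>F0 \<partial>PiM S (\<lambda>_. F0))"
  proof (intro nn_integral_cong)
    fix x assume "x \<in> space (PiM S (\<lambda>_. F0))"
    then have "restrict x S = x" by (auto simp: space_PiM PiE_def extensional_def restrict_def fun_eq_iff)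
    moreover have "restrict (x(i:=y)) S = restrict x S" for y using S(2) by (auto simp: restrict_def fun_eq_iff)
    ultimately show "q (g x) = (\<integral>\<^sup>+y. G (x(i:=y)) \<partial>F0)"
      by (simp add: G_def F.emeasure_space_1)
  qed
  also have "\<dots> = (\<integral>\<^sup>+x. G x \<partial>PiM T (\<lambda>_. F0))"
    unfolding T_def by (rule P.product_nn_integral_insert[OF S, symmetric]) (use G_m in \<open>simp add: T_def\<close>)
  also have "\<dots> = (\<integral>\<^sup>+x. G x \<partial>distr M (PiM T (\<lambda>_. F0)) (\<lambda>\<omega>. \<lambda>j\<in>T. W j \<omega>))" by (simp only: distrT)
  also have "\<dots> = (\<integral>\<^sup>+\<omega>. G (\<lambda>j\<in>T. W j \<omega>) \<partial>M)"
    by (rule nn_integral_distr[OF Ymeas]) (simp only: distrT G_m)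
  also have "\<dots> = (\<integral>\<^sup>+\<omega>. (\<integral>\<^sup>+w. h w (g (\<lambda>j\<in>S. W j \<omega>)) \<partial>F0) \<partial>M)"
    using T by (intro nn_integral_cong) (simp add: G_def q_def resT Int_absorb1[OF T(3)])
  finally show ?thesis .
qed

lemma iid_comp:
  fixes f :: "'w \<Rightarrow> real"
  assumes rv: "W \<in> measurable M F0" and dist: "distr M F0 W = F0" and fm: "f \<in> borel_measurable F0"
  shows "integrable M (\<lambda>\<omega>. f (W \<omega>)) \<longleftrightarrow> integrable F0 f"
    and "(\<integral>\<omega>. f (W \<omega>) \<partial>M) = (\<integral>w. f w \<partial>F0)"
proof -
  show "integrable M (\<lambda>\<omega>. f (W \<omega>)) \<longleftrightarrow> integrable F0 f"
    using integrable_distr_eq[OF rv fm] dist by simp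
  show "(\<integral>\<omega>. f (W \<omega>) \<partial>M) = (\<integral>w. f w \<partial>F0)"
    using integral_distr[OF rv fm] dist by simp
qed

lemma exp_neg_le: "(c::real) \<ge> 0 \<Longrightarrow> exp (- c) \<le> 1 / (1 + c)"
proof -
  assume c: "c \<ge> 0"
  have "1 + c \<le> exp c" by (rule exp_ge_add_one_self_aux) (use c in simp)
  then show ?thesis using c by (simp add: exp_minus field_simps)
qed

lemma wlln:
  fixes f :: "'w \<Rightarrow> real"
  assumes M: "prob_space M" and F0: "prob_space F0"
    and ind: "prob_space.indep_vars M (\<lambda>_. F0) W UNIV"
    and dist: "\<And>i. distr M F0 (W i) = F0"
    and f: "integrable F0 f" and \<epsilon>: "\<epsilon> > 0"
  shows "negl M (\<lambda>n. {\<omega>\<in>space M. \<epsilon> < \<bar>(1/real n) * (\<Sum>i<n. f (W i \<omega>)) - (\<integral>w. f w \<partial>F0)\<bar>})"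
proof (rule neglI_le)
  fix \<delta> :: real assume \<delta>: "\<delta> > 0"
  interpret M: prob_space M by (rule M)
  interpret F: prob_space F0 by (rule F0)
  have rv: "\<And>j. W j \<in> measurable M F0"
    using ind unfolding M.indep_vars_def by blast
  have fm[measurable]: "f \<in> borel_measurable F0" using f by auto
  define \<tau> where "\<tau> = \<epsilon> * min \<delta> 1 / 8"
  have \<tau>: "\<tau> > 0" using \<epsilon> \<delta> by (simp add: \<tau>_def)
  have lim: "(\<lambda>k::nat. \<integral>w. \<bar>f w\<bar> * indicator {w. real k < \<bar>f w\<bar>} w \<partial>F0) \<longlonglongrightarrow> (\<integral>w. 0 \<partial>F0)"
  proof (rule integral_dominated_convergence[where w="\<lambda>w. \<bar>f w\<bar>"])
    show "(\<lambda>w. 0::real) \<in> borel_measurable F0" by simp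
    show "\<And>k. (\<lambda>w. \<bar>f w\<bar> * indicator {w. real k < \<bar>f w\<bar>} w) \<in> borel_measurable F0"
      by measurable
    show "integrable F0 (\<lambda>w. \<bar>f w\<bar>)" using f by simp
    show "AE w in F0. (\<lambda>k. \<bar>f w\<bar> * indicator {w. real k < \<bar>f w\<bar>} w) \<longlonglongrightarrow> 0"
    proof (rule AE_I2)
      fix w
      obtain k0 :: nat where "\<bar>f w\<bar> < real k0" using reals_Archimedean2 by blast
      then have "eventually (\<lambda>k. \<bar>f w\<bar> * indicator {w. real k < \<bar>f w\<bar>} w = 0) sequentially"
        unfolding eventually_sequentially
        by (intro exI[of _ k0] allI impI) (auto simp: indicator_def)
      then show "(\<lambda>k. \<bar>f w\<bar> * indicator {w. real k < \<bar>f w\<bar>} w) \<longlonglongrightarrow> 0"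
        by (rule tendsto_eventually)
    qed
    show "\<And>k. AE w in F0. norm (\<bar>f w\<bar> * indicator {w. real k < \<bar>f w\<bar>} w) \<le> \<bar>f w\<bar>"
      by (auto simp: indicator_def)
  qed
  then have "eventually (\<lambda>k. (\<integral>w. \<bar>f w\<bar> * indicator {w. real k < \<bar>f w\<bar>} w \<partial>F0) < \<tau>) sequentially"
    using \<tau> by (simp add: order_tendstoD(2))
  then obtain k :: nat where k1: "k \<ge> 1" and kI: "(\<integral>w. \<bar>f w\<bar> * indicator {w. real k < \<bar>f w\<bar>} w \<partial>F0) < \<tau>"
    using eventually_ge_at_top[of 1] by (metis (mono_tags, lifting) eventually_sequentially order_refl max.cobounded1 max.cobounded2)
  define t where "t = real k"
  have t: "t > 0" using k1 by (simp add: t_def)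
  define u where "u w = (if \<bar>f w\<bar> \<le> t then f w else 0)" for w
  define v where "v w = (if \<bar>f w\<bar> \<le> t then 0 else f w)" for w
  have fuv: "\<And>w. f w = u w + v w" by (simp add: u_def v_def)
  have um[measurable]: "u \<in> borel_measurable F0" unfolding u_def by measurable
  have vm[measurable]: "v \<in> borel_measurable F0" unfolding v_def by measurable
  have int_u: "integrable F0 u"
    by (rule Bochner_Integration.integrable_bound[OF f um]) (auto simp: u_def)
  have int_v: "integrable F0 v"
    by (rule Bochner_Integration.integrable_bound[OF f vm]) (auto simp: v_def)
  have absv: "\<And>w. \<bar>v w\<bar> = \<bar>f w\<bar> * indicator {w. real k < \<bar>f w\<bar>} w"
    by (auto simp: v_def indicator_def t_def)
  have Eabsv: "(\<integral>w. \<bar>v w\<bar> \<partial>F0) < \<tau>" using kI by (simp add: absv)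
  have Ev: "\<bar>\<integral>w. v w \<partial>F0\<bar> < \<tau>"
    using integral_abs_bound[of F0 v] Eabsv by linarith
  have Ef: "(\<integral>w. f w \<partial>F0) = (\<integral>w. u w \<partial>F0) + (\<integral>w. v w \<partial>F0)"
    unfolding fuv by (rule Bochner_Integration.integral_add[OF int_u int_v])
  define c where "c = \<epsilon>\<^sup>2 / (8 * t\<^sup>2)"
  have c: "c > 0" using \<epsilon> t by (simp add: c_def)
  define N0 :: nat where "N0 = nat \<lceil>4 / (\<delta> * c)\<rceil> + 1"
  show "eventually (\<lambda>n. \<exists>A\<in>sets M. {\<omega>\<in>space M. \<epsilon> < \<bar>(1/real n) * (\<Sum>i<n. f (W i \<omega>)) - (\<integral>w. f w \<partial>F0)\<bar>} \<inter> space M \<subseteq> A \<and> measure M A \<le> \<delta>) sequentially"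
    using eventually_ge_at_top[of N0]
  proof (rule eventually_mono)
    fix n assume nN: "N0 \<le> n"
    then have n1: "n \<ge> 1" by (simp add: N0_def)
    have nc: "real n * c \<ge> 4 / \<delta>"
    proof -
      have "4 / (\<delta> * c) \<le> real n" using nN unfolding N0_def by linarith
      then show ?thesis using \<delta> c by (simp add: field_simps)
    qed
    define A1 where "A1 = {\<omega>\<in>space M. real n * \<epsilon> / 2 \<le> \<bar>(\<Sum>i\<in>{..<n}. u (W i \<omega>)) - real (card {..<n}) * (\<integral>\<omega>. u (W 0 \<omega>) \<partial>M)\<bar>}"
    define Z where "Z \<omega> = (1 / real n) * (\<Sum>i<n. \<bar>v (W i \<omega>)\<bar>)" for \<omega>
    define A2 where "A2 = {\<omega>\<in>space M. \<epsilon> / 4 \<le> Z \<omega>}"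
    have rvm[measurable]: "\<And>i. W i \<in> measurable M F0" by (rule rv)
    have Zm[measurable]: "Z \<in> borel_measurable M" unfolding Z_def by measurable
    have A1s: "A1 \<in> sets M" unfolding A1_def by measurable
    have A2s: "A2 \<in> sets M" unfolding A2_def by measurable
    have H: "Hoeffding_ineq_iid M {..<n} (\<lambda>i \<omega>. u (W i \<omega>)) (\<lambda>\<omega>. u (W 0 \<omega>)) (-t) t"
      unfolding Hoeffding_ineq_iid_def iid_interval_bounded_random_variables_def
        iid_interval_bounded_random_variables_axioms_def
    proof (intro conjI M allI impI)
      show "finite {..<n}" by simp
      show "M.indep_vars (\<lambda>_. borel) (\<lambda>i \<omega>. u (W i \<omega>)) {..<n}"
        by (rule M.indep_vars_compose2[OF M.indep_vars_subset[OF ind]]) auto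
      fix i assume "i \<in> {..<n}"
      show "distr M borel (\<lambda>\<omega>. u (W i \<omega>)) = distr M borel (\<lambda>\<omega>. u (W 0 \<omega>))"
      proof -
        have "distr M borel (\<lambda>\<omega>. u (W j \<omega>)) = distr F0 borel u" for j
          using distr_distr[OF um rv[of j]] dist[of j] by (simp add: comp_def)
        then show ?thesis by simp
      qed
    next
      show "M.random_variable borel (\<lambda>\<omega>. u (W 0 \<omega>))" by measurable
      show "AE x in M. u (W 0 x) \<in> {- t..t}" using t by (auto simp: u_def)
    qed
    have "measure M A1 \<le> 2 * exp (- 2 * (real n * \<epsilon> / 2)\<^sup>2 / (real (card {..<n}) * (t - - t)\<^sup>2))"
      unfolding A1_def
      by (rule Hoeffding_ineq_iid.Hoeffding_ineq_abs_ge[OF H]) (use \<epsilon> t n1 in \<open>auto simp: lessThan_empty_iff\<close>)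
    also have "- 2 * (real n * \<epsilon> / 2)\<^sup>2 / (real (card {..<n}) * (t - - t)\<^sup>2) = - (real n * c)"
      using n1 t by (simp add: c_def power2_eq_square field_simps)
    also have "2 * exp (- (real n * c)) \<le> 2 * (1 / (1 + real n * c))"
      using exp_neg_le[of "real n * c"] c by simp
    also have "\<dots> \<le> \<delta> / 2"
    proof -
      have "4 / \<delta> \<le> 1 + real n * c" using nc by linarith
      then have "4 \<le> \<delta> * (1 + real n * c)" using \<delta> by (simp add: field_simps)
      moreover have "1 + real n * c > 0" using c by (simp add: add_pos_nonneg)
      ultimately show ?thesis by (simp add: field_simps)
    qed
    finally have mA1: "measure M A1 \<le> \<delta> / 2" .
    have intZ: "integrable M Z"
      unfolding Z_def
      using iid_comp(1)[OF rv dist, of "\<lambda>w. \<bar>v w\<bar>"] int_v by auto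
    have EZ: "(\<integral>\<omega>. Z \<omega> \<partial>M) = (\<integral>w. \<bar>v w\<bar> \<partial>F0)"
    proof -
      have "(\<integral>\<omega>. Z \<omega> \<partial>M) = (1 / real n) * (\<Sum>i<n. \<integral>\<omega>. \<bar>v (W i \<omega>)\<bar> \<partial>M)"
        unfolding Z_def
        using iid_comp(1)[OF rv dist, of "\<lambda>w. \<bar>v w\<bar>"] int_v by (simp add: Bochner_Integration.integral_sum)
      also have "\<dots> = (1 / real n) * (\<Sum>i<n. \<integral>w. \<bar>v w\<bar> \<partial>F0)"
        using iid_comp(2)[OF rv dist, of "\<lambda>w. \<bar>v w\<bar>"] by simp
      also have "\<dots> = (\<integral>w. \<bar>v w\<bar> \<partial>F0)" using n1 by simp
      finally show ?thesis .
    qed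
    have "measure M A2 \<le> (\<integral>\<omega>. Z \<omega> \<partial>M) / (\<epsilon> / 4)"
      unfolding A2_def
      by (rule integral_Markov_inequality_measure[OF intZ]) (use \<epsilon> in \<open>auto simp: Z_def intro!: sum_nonneg\<close>)
    also have "\<dots> \<le> \<tau> / (\<epsilon> / 4)"
      using EZ Eabsv \<epsilon> by (simp add: divide_right_mono)
    also have "\<dots> \<le> \<delta> / 2"
      using \<epsilon> \<delta> by (simp add: \<tau>_def field_simps)
    finally have mA2: "measure M A2 \<le> \<delta> / 2" .
    have "measure M (A1 \<union> A2) \<le> \<delta>"
      using measure_Un_le[OF A1s A2s] mA1 mA2 by linarith
    moreover have "{\<omega>\<in>space M. \<epsilon> < \<bar>(1/real n) * (\<Sum>i<n. f (W i \<omega>)) - (\<integral>w. f w \<partial>F0)\<bar>} \<inter> space M \<subseteq> A1 \<union> A2"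
    proof
      fix \<omega> assume \<omega>: "\<omega> \<in> {\<omega>\<in>space M. \<epsilon> < \<bar>(1/real n) * (\<Sum>i<n. f (W i \<omega>)) - (\<integral>w. f w \<partial>F0)\<bar>} \<inter> space M"
      show "\<omega> \<in> A1 \<union> A2"
      proof (rule ccontr)
        assume "\<omega> \<notin> A1 \<union> A2"
        then have a1: "\<bar>(\<Sum>i<n. u (W i \<omega>)) - real n * (\<integral>w. u w \<partial>F0)\<bar> < real n * \<epsilon> / 2"
          and a2: "Z \<omega> < \<epsilon> / 4"
          using \<omega> iid_comp(2)[OF rv dist um, of 0] by (auto simp: A1_def A2_def)
        have sv: "\<bar>\<Sum>i<n. v (W i \<omega>)\<bar> \<le> (\<Sum>i<n. \<bar>v (W i \<omega>)\<bar>)" by (rule sum_abs)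
        have sf: "(\<Sum>i<n. f (W i \<omega>)) = (\<Sum>i<n. u (W i \<omega>)) + (\<Sum>i<n. v (W i \<omega>))"
          by (simp add: fuv sum.distrib)
        define a where "a = (\<Sum>i<n. u (W i \<omega>))"
        define b where "b = (\<Sum>i<n. v (W i \<omega>))"
        define b' where "b' = (\<Sum>i<n. \<bar>v (W i \<omega>)\<bar>)"
        have nn: "real n > 0" using n1 by simp
        have e1: "\<bar>a / real n - (\<integral>w. u w \<partial>F0)\<bar> < \<epsilon> / 2"
        proof -
          have "\<bar>a / real n - (\<integral>w. u w \<partial>F0)\<bar> = \<bar>a - real n * (\<integral>w. u w \<partial>F0)\<bar> / real n"
            using nn by (simp add: field_simps abs_divide[symmetric])
          also have "\<dots> < \<epsilon> / 2"
          proof (subst pos_divide_less_eq[OF nn])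
            have "\<epsilon> / 2 * real n = real n * \<epsilon> / 2" by simp
            then show "\<bar>a - real n * (\<integral>w. u w \<partial>F0)\<bar> < \<epsilon> / 2 * real n"
              using a1 unfolding a_def by linarith
          qed
          finally show ?thesis .
        qed
        have e2: "\<bar>b / real n\<bar> < \<epsilon> / 4"
        proof -
          have "\<bar>b / real n\<bar> = \<bar>b\<bar> / real n" using nn by simp
          also have "\<dots> \<le> b' / real n" using sv nn unfolding b_def b'_def by (simp add: divide_right_mono)
          also have "\<dots> = Z \<omega>" by (simp add: Z_def b'_def)
          finally show ?thesis using a2 by linarith
        qed
        have "\<tau> \<le> \<epsilon> / 8" using \<epsilon> by (simp add: \<tau>_def)
        then have e3: "\<bar>\<integral>w. v w \<partial>F0\<bar> < \<epsilon> / 8" using Ev by linarith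
        have "(1/real n) * (\<Sum>i<n. f (W i \<omega>)) - (\<integral>w. f w \<partial>F0)
              = (a / real n - (\<integral>w. u w \<partial>F0)) + b / real n - (\<integral>w. v w \<partial>F0)"
          using sf Ef unfolding a_def b_def by (simp add: add_divide_distrib)
        then have "\<bar>(1/real n) * (\<Sum>i<n. f (W i \<omega>)) - (\<integral>w. f w \<partial>F0)\<bar> < \<epsilon>"
          using e1 e2 e3 by linarith
        then show False using \<omega> by simp
      qed
    qed
    ultimately show "\<exists>A\<in>sets M. {\<omega>\<in>space M. \<epsilon> < \<bar>(1/real n) * (\<Sum>i<n. f (W i \<omega>)) - (\<integral>w. f w \<partial>F0)\<bar>} \<inter> space M \<subseteq> A \<and> measure M A \<le> \<delta>"
      using A1s A2s by blast
  qed
qed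

lemma jac_of:
  fixes f :: "real^'n \<Rightarrow> real^'m"
  assumes "(f has_derivative (\<lambda>h. A *v h)) (at x)"
  shows "jacobian f (at x) = A"
proof -
  have "(\<lambda>h. A *v h) = frechet_derivative f (at x)" by (rule frechet_derivative_at[OF assms])
  then have "frechet_derivative f (at x) = (\<lambda>h. A *v h)" by simp
  then show ?thesis unfolding jacobian_def by (simp only: matrix_of_matrix_vector_mul)
qed

lemma mat_sum_mult:
  fixes J :: "'i \<Rightarrow> real^'n^'m"
  shows "finite S \<Longrightarrow> (\<Sum>i\<in>S. J i) *v h = (\<Sum>i\<in>S. J i *v h)"
proof (induction S rule: finite_induct)
  case empty then show ?case by simp
next
  case (insert x F)
  then show ?case by (simp add: matrix_vector_mult_add_rdistrib)
qed

lemma mat_scale_mult: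
  fixes A :: "real^'n^'m"
  shows "(c *\<^sub>R A) *v h = c *\<^sub>R (A *v h)"
  by (rule scaleR_matrix_vector_assoc[symmetric])

lemma has_derivative_sum_mat:
  fixes J :: "'i \<Rightarrow> real^'n^'m"
  assumes "finite S" "\<And>i. i \<in> S \<Longrightarrow> (f i has_derivative (\<lambda>h. J i *v h)) (at x)"
  shows "((\<lambda>t. \<Sum>i\<in>S. f i t) has_derivative (\<lambda>h. (\<Sum>i\<in>S. J i) *v h)) (at x)"
proof -
  have eq: "(\<lambda>h. (\<Sum>i\<in>S. J i) *v h) = (\<lambda>h. \<Sum>i\<in>S. J i *v h)"
    using mat_sum_mult[OF assms(1)] by auto
  show ?thesis unfolding eq by (rule has_derivative_sum) (rule assms(2))
qed

lemma has_derivative_scale_mat: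
  fixes A :: "real^'n^'m"
  assumes "(f has_derivative (\<lambda>h. A *v h)) (at x)"
  shows "((\<lambda>t. c *\<^sub>R f t) has_derivative (\<lambda>h. (c *\<^sub>R A) *v h)) (at x)"
proof -
  have eq: "(\<lambda>h. (c *\<^sub>R A) *v h) = (\<lambda>h. c *\<^sub>R (A *v h))"
    by (simp add: mat_scale_mult)
  show ?thesis unfolding eq by (rule has_derivative_scaleR_right[OF assms])
qed

lemma norm_mat_le:
  fixes A :: "real^'n^'m"
  shows "norm A \<le> (\<Sum>s\<in>UNIV. \<Sum>k\<in>UNIV. \<bar>A $ s $ k\<bar>)"
proof -
  have "norm A = L2_set (\<lambda>s. norm (A $ s)) UNIV" by (simp add: norm_vec_def)
  also have "\<dots> \<le> (\<Sum>s\<in>UNIV. norm (A $ s))" by (rule L2_set_le_sum) simp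
  also have "\<dots> \<le> (\<Sum>s\<in>UNIV. \<Sum>k\<in>UNIV. \<bar>A $ s $ k\<bar>)"
    by (intro sum_mono norm_le_l1_cart)
  finally show ?thesis .
qed

lemma sum_folds:
  fixes g :: "nat \<Rightarrow> 'b::comm_monoid_add" and L n :: nat and I :: "nat \<Rightarrow> nat set"
  assumes "(\<Union>l<L. I l) = {..<n}" "disjoint_family_on I {..<L}"
  shows "(\<Sum>l<L. \<Sum>i\<in>I l. g i) = (\<Sum>i<n. g i)"
proof -
  have fin: "\<forall>l\<in>{..<L}. finite (I l)"
    using assms(1) by (metis UN_I finite_lessThan finite_subset subsetI)
  have "(\<Sum>i<n. g i) = sum g (\<Union>l<L. I l)" using assms(1) by simp
  also have "\<dots> = (\<Sum>l<L. sum g (I l))"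
    using sum.UNION_disjoint_family[of "{..<L}" I g] fin assms(2) by simp
  finally show ?thesis by simp
qed

lemma decomp_bound:
  fixes A B :: "nat \<Rightarrow> nat \<Rightarrow> real^'d^'q" and C :: "nat \<Rightarrow> real^'d^'q" and Y :: "real^'d^'q"
    and dd :: "nat \<Rightarrow> nat \<Rightarrow> real" and L n :: nat and I :: "nat \<Rightarrow> nat set"
  assumes folds: "(\<Union>l<L. I l) = {..<n}" "disjoint_family_on I {..<L}" and n: "n > 0"
    and bnd: "\<And>l i. l < L \<Longrightarrow> i \<in> I l \<Longrightarrow> norm (A l i - B l i) \<le> dd l i * p"
  shows "norm ((1/real n) *\<^sub>R (\<Sum>l<L. \<Sum>i\<in>I l. A l i) - Y)
     \<le> p * ((1/real n) * (\<Sum>l<L. \<Sum>i\<in>I l. dd l i))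
       + (\<Sum>l<L. \<Sum>s\<in>UNIV. \<Sum>k\<in>UNIV. (1/real n) * (\<Sum>i\<in>I l. \<bar>B l i $ s $ k - C i $ s $ k\<bar>))
       + (\<Sum>s\<in>UNIV. \<Sum>k\<in>UNIV. \<bar>(1/real n) * (\<Sum>i<n. C i $ s $ k) - Y $ s $ k\<bar>)"
proof -
  let ?c = "1 / real n"
  have c0: "?c \<ge> 0" by simp
  have fin: "\<And>l. l < L \<Longrightarrow> finite (I l)"
    using folds(1) by (metis UN_I finite_lessThan finite_subset subsetI lessThan_iff)
  have sC: "(\<Sum>l<L. \<Sum>i\<in>I l. C i) = (\<Sum>i<n. C i)" by (rule sum_folds[OF folds])
  have split: "?c *\<^sub>R (\<Sum>l<L. \<Sum>i\<in>I l. A l i) - Y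
     = ?c *\<^sub>R (\<Sum>l<L. \<Sum>i\<in>I l. (A l i - B l i))
       + (\<Sum>l<L. ?c *\<^sub>R (\<Sum>i\<in>I l. (B l i - C i)))
       + (?c *\<^sub>R (\<Sum>i<n. C i) - Y)"
    by (simp add: sum_subtractf scaleR_diff_right scaleR_sum_right sC[symmetric] algebra_simps)
  have t1: "norm (?c *\<^sub>R (\<Sum>l<L. \<Sum>i\<in>I l. (A l i - B l i))) \<le> p * (?c * (\<Sum>l<L. \<Sum>i\<in>I l. dd l i))"
  proof -
    have "norm (?c *\<^sub>R (\<Sum>l<L. \<Sum>i\<in>I l. (A l i - B l i))) = ?c * norm (\<Sum>l<L. \<Sum>i\<in>I l. (A l i - B l i))"
      by simp
    also have "\<dots> \<le> ?c * (\<Sum>l<L. \<Sum>i\<in>I l. dd l i * p)"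
    proof (rule mult_left_mono[OF _ c0])
      have "norm (\<Sum>l<L. \<Sum>i\<in>I l. (A l i - B l i)) \<le> (\<Sum>l<L. norm (\<Sum>i\<in>I l. (A l i - B l i)))"
        by (rule norm_sum)
      also have "\<dots> \<le> (\<Sum>l<L. \<Sum>i\<in>I l. norm (A l i - B l i))"
        by (intro sum_mono norm_sum)
      also have "\<dots> \<le> (\<Sum>l<L. \<Sum>i\<in>I l. dd l i * p)"
        by (intro sum_mono bnd) auto
      finally show "norm (\<Sum>l<L. \<Sum>i\<in>I l. (A l i - B l i)) \<le> (\<Sum>l<L. \<Sum>i\<in>I l. dd l i * p)" .
    qed
    also have "\<dots> = p * (?c * (\<Sum>l<L. \<Sum>i\<in>I l. dd l i))"
      by (simp add: sum_distrib_left mult.commute mult.left_commute)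
    finally show ?thesis .
  qed
  have t2: "norm (\<Sum>l<L. ?c *\<^sub>R (\<Sum>i\<in>I l. (B l i - C i)))
      \<le> (\<Sum>l<L. \<Sum>s\<in>UNIV. \<Sum>k\<in>UNIV. ?c * (\<Sum>i\<in>I l. \<bar>B l i $ s $ k - C i $ s $ k\<bar>))"
  proof -
    have "norm (\<Sum>l<L. ?c *\<^sub>R (\<Sum>i\<in>I l. (B l i - C i))) \<le> (\<Sum>l<L. norm (?c *\<^sub>R (\<Sum>i\<in>I l. (B l i - C i))))"
      by (rule norm_sum)
    also have "\<dots> \<le> (\<Sum>l<L. \<Sum>s\<in>UNIV. \<Sum>k\<in>UNIV. \<bar>(?c *\<^sub>R (\<Sum>i\<in>I l. (B l i - C i))) $ s $ k\<bar>)"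
      by (intro sum_mono norm_mat_le)
    also have "\<dots> \<le> (\<Sum>l<L. \<Sum>s\<in>UNIV. \<Sum>k\<in>UNIV. ?c * (\<Sum>i\<in>I l. \<bar>B l i $ s $ k - C i $ s $ k\<bar>))"
    proof (intro sum_mono)
      fix l s k
      have "\<bar>(?c *\<^sub>R (\<Sum>i\<in>I l. (B l i - C i))) $ s $ k\<bar> = ?c * \<bar>\<Sum>i\<in>I l. (B l i $ s $ k - C i $ s $ k)\<bar>"
        by (simp add: sum_component abs_mult)
      also have "\<dots> \<le> ?c * (\<Sum>i\<in>I l. \<bar>B l i $ s $ k - C i $ s $ k\<bar>)"
        by (intro mult_left_mono[OF sum_abs c0])
      finally show "\<bar>(?c *\<^sub>R (\<Sum>i\<in>I l. (B l i - C i))) $ s $ k\<bar> \<le> ?c * (\<Sum>i\<in>I l. \<bar>B l i $ s $ k - C i $ s $ k\<bar>)" .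
    qed
    finally show ?thesis .
  qed
  have t3: "norm (?c *\<^sub>R (\<Sum>i<n. C i) - Y) \<le> (\<Sum>s\<in>UNIV. \<Sum>k\<in>UNIV. \<bar>?c * (\<Sum>i<n. C i $ s $ k) - Y $ s $ k\<bar>)"
  proof -
    have "norm (?c *\<^sub>R (\<Sum>i<n. C i) - Y) \<le> (\<Sum>s\<in>UNIV. \<Sum>k\<in>UNIV. \<bar>(?c *\<^sub>R (\<Sum>i<n. C i) - Y) $ s $ k\<bar>)"
      by (rule norm_mat_le)
    also have "\<dots> = (\<Sum>s\<in>UNIV. \<Sum>k\<in>UNIV. \<bar>?c * (\<Sum>i<n. C i $ s $ k) - Y $ s $ k\<bar>)"
      by (simp add: sum_component)
    finally show ?thesis .
  qed
  have "norm (?c *\<^sub>R (\<Sum>l<L. \<Sum>i\<in>I l. A l i) - Y)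
      \<le> norm (?c *\<^sub>R (\<Sum>l<L. \<Sum>i\<in>I l. (A l i - B l i))) + norm (\<Sum>l<L. ?c *\<^sub>R (\<Sum>i\<in>I l. (B l i - C i)))
        + norm (?c *\<^sub>R (\<Sum>i<n. C i) - Y)"
    unfolding split by (intro norm_triangle_le add_mono order_refl)
  with t1 t2 t3 show ?thesis by linarith
qed

lemma vecnth_meas:
  assumes "f \<in> borel_measurable M"
  shows "(\<lambda>x. (f x :: real^'a^'b) $ s $ k) \<in> borel_measurable M"
proof -
  have "(\<lambda>A::real^'a^'b. A $ s $ k) \<in> borel_measurable borel"
    by (rule borel_measurable_continuous_onI)
       (intro linear_continuous_on bounded_linear_compose[OF bounded_linear_vec_nth bounded_linear_vec_nth])
  from measurable_comp[OF assms this] show ?thesis by (simp add: comp_def)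
qed

lemma inner_meas:
  fixes h :: "'w \<Rightarrow> 'x \<Rightarrow> ennreal"
  assumes F0: "prob_space F0" and h: "(\<lambda>(w,x). h w x) \<in> borel_measurable (F0 \<Otimes>\<^sub>M X)"
  shows "(\<lambda>x. \<integral>\<^sup>+w. h w x \<partial>F0) \<in> borel_measurable X"
proof -
  interpret F: prob_space F0 by (rule F0)
  have hswap: "(\<lambda>(x,w). h w x) \<in> borel_measurable (X \<Otimes>\<^sub>M F0)"
  proof -
    have "(\<lambda>(w,x). h w x) \<circ> (\<lambda>(x,y). (y,x)) \<in> borel_measurable (X \<Otimes>\<^sub>M F0)"
      by (rule measurable_comp[OF measurable_pair_swap' h])
    moreover have "(\<lambda>(w,x). h w x) \<circ> (\<lambda>(x,y). (y,x)) = (\<lambda>(x,w). h w x)"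
      by (auto simp: fun_eq_iff)
    ultimately show ?thesis by simp
  qed
  then show ?thesis using F.borel_measurable_nn_integral[of "\<lambda>x w. h w x" X] by simp
qed

lemma comp_meas:
  assumes h: "(\<lambda>(w,x). h w x) \<in> measurable (F0 \<Otimes>\<^sub>M X) N"
    and a: "a \<in> measurable M F0" and b: "b \<in> measurable M X"
  shows "(\<lambda>\<omega>. h (a \<omega>) (b \<omega>)) \<in> measurable M N"
proof -
  have "(\<lambda>\<omega>. (a \<omega>, b \<omega>)) \<in> measurable M (F0 \<Otimes>\<^sub>M X)" by (rule measurable_Pair[OF a b])
  from measurable_comp[OF this h] show ?thesis by (simp add: comp_def)
qed

lemma key_sum_bound:
  fixes W :: "nat \<Rightarrow> 'a \<Rightarrow> 'w" and F0 :: "'w measure" and h :: "'w \<Rightarrow> 'x \<Rightarrow> ennreal"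
  assumes M: "prob_space M" and F0: "prob_space F0"
    and ind: "prob_space.indep_vars M (\<lambda>_. F0) W UNIV"
    and dist: "\<And>i. distr M F0 (W i) = F0"
    and S: "finite S" and Ii: "finite Ii" "Ii \<inter> S = {}"
    and g: "g \<in> measurable (PiM S (\<lambda>_. F0)) X"
    and h: "(\<lambda>(w,x). h w x) \<in> borel_measurable (F0 \<Otimes>\<^sub>M X)"
    and bnd: "\<And>x. x \<in> space X \<Longrightarrow> (\<integral>\<^sup>+w. h w x \<partial>F0) \<le> ennreal B" and B: "B \<ge> 0"
  shows "(\<integral>\<^sup>+\<omega>. (\<Sum>i\<in>Ii. h (W i \<omega>) (g (\<lambda>j\<in>S. W j \<omega>))) \<partial>M) \<le> ennreal (real (card Ii) * B)"
proof -
  interpret M: prob_space M by (rule M)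
  have rv: "\<And>j. W j \<in> measurable M F0"
    using ind unfolding M.indep_vars_def by blast
  have gm: "(\<lambda>\<omega>. g (\<lambda>j\<in>S. W j \<omega>)) \<in> measurable M X"
    by (rule measurable_comp[OF measurable_restrict[OF rv] g, unfolded comp_def])
  have hm: "\<And>i. (\<lambda>\<omega>. h (W i \<omega>) (g (\<lambda>j\<in>S. W j \<omega>))) \<in> borel_measurable M"
    by (rule comp_meas[OF h rv gm])
  have "(\<integral>\<^sup>+\<omega>. (\<Sum>i\<in>Ii. h (W i \<omega>) (g (\<lambda>j\<in>S. W j \<omega>))) \<partial>M)
      = (\<Sum>i\<in>Ii. \<integral>\<^sup>+\<omega>. h (W i \<omega>) (g (\<lambda>j\<in>S. W j \<omega>)) \<partial>M)"
    by (rule nn_integral_sum) (use hm in auto)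
  also have "\<dots> = (\<Sum>i\<in>Ii. \<integral>\<^sup>+\<omega>. (\<integral>\<^sup>+w. h w (g (\<lambda>j\<in>S. W j \<omega>)) \<partial>F0) \<partial>M)"
  proof (rule sum.cong[OF refl])
    fix i assume "i \<in> Ii"
    then have "i \<notin> S" using Ii by blast
    then show "(\<integral>\<^sup>+\<omega>. h (W i \<omega>) (g (\<lambda>j\<in>S. W j \<omega>)) \<partial>M) = (\<integral>\<^sup>+\<omega>. (\<integral>\<^sup>+w. h w (g (\<lambda>j\<in>S. W j \<omega>)) \<partial>F0) \<partial>M)"
      by (rule indep_key[OF M F0 ind dist S _ g h])
  qed
  also have "\<dots> \<le> (\<Sum>i\<in>Ii. \<integral>\<^sup>+\<omega>. ennreal B \<partial>M)"
  proof (intro sum_mono nn_integral_mono)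
    fix i \<omega> assume "\<omega> \<in> space M"
    then have "g (\<lambda>j\<in>S. W j \<omega>) \<in> space X" using measurable_space[OF gm] by simp
    then show "(\<integral>\<^sup>+w. h w (g (\<lambda>j\<in>S. W j \<omega>)) \<partial>F0) \<le> ennreal B" by (rule bnd)
  qed
  also have "\<dots> = (\<Sum>i\<in>Ii. ennreal B)" by (simp add: M.emeasure_space_1)
  also have "\<dots> = ennreal (real (card Ii) * B)"
    using B by (simp add: sum_ennreal ennreal_mult' ennreal_of_nat_eq_real_of_nat)
  finally show ?thesis .
qed

theorem lemma20:
  fixes M :: "'a measure"
    and F0 :: "('y \<times> 'v \<times> 'z) measure"
    and W :: "nat \<Rightarrow> 'a \<Rightarrow> 'y \<times> 'v \<times> 'z"
    and m :: "'j::finite \<Rightarrow> 'y \<Rightarrow> 'v \<Rightarrow> real^'d \<Rightarrow> 'e::real_normed_vector \<Rightarrow> real"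
    and Zsub :: "'j \<Rightarrow> 'z \<Rightarrow> 'u"
    and \<theta>0 :: "real^'d"
    and \<eta>0 :: "'e"
    and Xi :: "'e set"
    and \<kappa>0 :: "'j \<Rightarrow> 'z \<Rightarrow> real^'q"
    and L :: nat
    and I :: "nat \<Rightarrow> nat \<Rightarrow> nat set"
    and MEta :: "'e measure"
    and MK :: "('j \<Rightarrow> 'z \<Rightarrow> real^'q) measure"
    and \<eta>hat :: "nat \<Rightarrow> nat \<Rightarrow> 'a \<Rightarrow> 'e"
    and \<kappa>hat :: "nat \<Rightarrow> nat \<Rightarrow> 'a \<Rightarrow> 'j \<Rightarrow> 'z \<Rightarrow> real^'q"
    and \<theta>bar :: "nat \<Rightarrow> 'a \<Rightarrow> real^'d"
    and \<Upsilon> :: "real^'d^'q"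
    and N :: "(real^'d) set"
  assumes M: "prob_space M"
    and F0: "prob_space F0"
    and iid: "prob_space.indep_vars M (\<lambda>_. F0) W UNIV" "\<And>i. distr M F0 (W i) = F0"
    and \<eta>0: "\<eta>0 \<in> Xi" and \<kappa>0: "\<kappa>0 \<in> kappa_class Zsub"
    and L: "L > 0"
    and folds: "\<And>n. (\<Union>l<L. I n l) = {..<n}" "\<And>n. disjoint_family_on (I n) {..<L}"
    and \<eta>hat_vals: "\<And>n l \<omega>. l < L \<Longrightarrow> \<eta>hat n l \<omega> \<in> Xi"
    and \<kappa>hat_vals: "\<And>n l \<omega>. l < L \<Longrightarrow> \<kappa>hat n l \<omega> \<in> kappa_class Zsub"
    and \<eta>hat_outside: "\<And>n l. l < L \<Longrightarrow> \<exists>g. g \<in> measurable (PiM ({..<n} - I n l) (\<lambda>_. F0)) MEta \<and>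
            (\<forall>\<omega>\<in>space M. \<eta>hat n l \<omega> = g (\<lambda>i\<in>{..<n} - I n l. W i \<omega>))"
    and \<kappa>hat_outside: "\<And>n l. l < L \<Longrightarrow> \<exists>g. g \<in> measurable (PiM ({..<n} - I n l) (\<lambda>_. F0)) MK \<and>
            (\<forall>\<omega>\<in>space M. \<kappa>hat n l \<omega> = g (\<lambda>i\<in>{..<n} - I n l. W i \<omega>))"
    and jac_meas: "\<And>\<theta>. (\<lambda>(w, e, k). jacobian (\<lambda>t. psi m w t e k) (at \<theta>))
            \<in> borel_measurable (F0 \<Otimes>\<^sub>M (MEta \<Otimes>\<^sub>M MK))"
    and \<Upsilon>_int: "integrable F0 (\<lambda>w. jacobian (\<lambda>t. psi m w t \<eta>0 \<kappa>0) (at \<theta>0))"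
    and \<Upsilon>_def: "\<Upsilon> = (\<integral>w. jacobian (\<lambda>t. psi m w t \<eta>0 \<kappa>0) (at \<theta>0) \<partial>F0)"
    and N: "open N" "\<theta>0 \<in> N"
    and cond_i: "\<And>l. l < L \<Longrightarrow> conv_prob_zero_enn M
            (\<lambda>n \<omega>. ennreal (norm (\<eta>hat n l \<omega> - \<eta>0)) * kappa_L2 F0 (\<kappa>hat n l \<omega>) \<kappa>0)"
    and cond_ii: "\<exists>\<delta>>0. \<exists>C1>0. \<exists>C2>0. \<exists>d :: 'y \<times> 'v \<times> 'z \<Rightarrow> 'e \<Rightarrow> ('j \<Rightarrow> 'z \<Rightarrow> real^'q) \<Rightarrow> real.
            (\<lambda>(w, e, k). d w e k) \<in> borel_measurable (F0 \<Otimes>\<^sub>M (MEta \<Otimes>\<^sub>M MK)) \<and>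
            (\<forall>e\<in>Xi. \<forall>k\<in>kappa_class Zsub.
               ennreal (norm (e - \<eta>0)) * kappa_L2 F0 k \<kappa>0 < ennreal \<delta> \<longrightarrow>
                 (\<forall>w\<in>space F0. \<forall>\<theta>\<in>N. (\<lambda>t. psi m w t e k) differentiable (at \<theta>)) \<and>
                 (\<forall>w\<in>space F0. \<forall>\<theta>\<in>N.
                    norm (jacobian (\<lambda>t. psi m w t e k) (at \<theta>) - jacobian (\<lambda>t. psi m w t e k) (at \<theta>0))
                      \<le> d w e k * norm (\<theta> - \<theta>0) powr C1) \<and>
                 (\<integral>\<^sup>+ w. ennreal (d w e k) \<partial>F0) < ennreal C2)"
    and cond_iii: "\<And>l s k. l < L \<Longrightarrow> conv_prob_zero_enn M
            (\<lambda>n \<omega>. \<integral>\<^sup>+ w. ennreal \<bar>jacobian (\<lambda>t. psi m w t (\<eta>hat n l \<omega>) (\<kappa>hat n l \<omega>)) (at \<theta>0) $ s $ k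
                                 - jacobian (\<lambda>t. psi m w t \<eta>0 \<kappa>0) (at \<theta>0) $ s $ k\<bar> \<partial>F0)"
    and \<theta>bar: "conv_prob M \<theta>bar \<theta>0"
  shows "conv_prob M
           (\<lambda>n \<omega>. jacobian (psi_hat m L (I n) (\<lambda>i. W i \<omega>) (\<lambda>l. \<eta>hat n l \<omega>) (\<lambda>l. \<kappa>hat n l \<omega>) n)
                      (at (\<theta>bar n \<omega>))) \<Upsilon>"
  proof -
  interpret M: prob_space M by (rule M)
  interpret F: prob_space F0 by (rule F0)
  have fmM: "finite_measure M" by (rule prob_space.axioms(1)[OF M])
  have rv: "\<And>j. W j \<in> measurable M F0"
    using iid(1) unfolding M.indep_vars_def by blast
  have Wsp: "\<And>j \<omega>. \<omega> \<in> space M \<Longrightarrow> W j \<omega> \<in> space F0"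
    using measurable_space[OF rv] by blast
  from cond_ii obtain \<delta>0 C1 C2 and d :: "'y \<times> 'v \<times> 'z \<Rightarrow> 'e \<Rightarrow> ('j \<Rightarrow> 'z \<Rightarrow> real^'q) \<Rightarrow> real"
    where \<delta>0: "\<delta>0 > 0" and C1: "C1 > 0" and C2: "C2 > 0"
    and dm: "(\<lambda>(w, e, k). d w e k) \<in> borel_measurable (F0 \<Otimes>\<^sub>M (MEta \<Otimes>\<^sub>M MK))"
    and cii: "\<forall>e\<in>Xi. \<forall>k\<in>kappa_class Zsub.
               ennreal (norm (e - \<eta>0)) * kappa_L2 F0 k \<kappa>0 < ennreal \<delta>0 \<longrightarrow>
                 (\<forall>w\<in>space F0. \<forall>\<theta>\<in>N. (\<lambda>t. psi m w t e k) differentiable (at \<theta>)) \<and>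
                 (\<forall>w\<in>space F0. \<forall>\<theta>\<in>N.
                    norm (jacobian (\<lambda>t. psi m w t e k) (at \<theta>) - jacobian (\<lambda>t. psi m w t e k) (at \<theta>0))
                      \<le> d w e k * norm (\<theta> - \<theta>0) powr C1) \<and>
                 (\<integral>\<^sup>+ w. ennreal (d w e k) \<partial>F0) < ennreal C2"
    by (elim exE conjE) (rule that, assumption+)
  define good where "good e k \<longleftrightarrow> e \<in> Xi \<and> k \<in> kappa_class Zsub \<and>
      ennreal (norm (e - \<eta>0)) * kappa_L2 F0 k \<kappa>0 < ennreal \<delta>0" for e k
  have cii': "\<And>e k. good e k \<Longrightarrow> (\<forall>w\<in>space F0. \<forall>\<theta>\<in>N. (\<lambda>t. psi m w t e k) differentiable (at \<theta>)) \<and>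
                 (\<forall>w\<in>space F0. \<forall>\<theta>\<in>N.
                    norm (jacobian (\<lambda>t. psi m w t e k) (at \<theta>) - jacobian (\<lambda>t. psi m w t e k) (at \<theta>0))
                      \<le> d w e k * norm (\<theta> - \<theta>0) powr C1) \<and>
                 (\<integral>\<^sup>+ w. ennreal (d w e k) \<partial>F0) < ennreal C2"
  proof -
    fix e k assume "good e k"
    then have "e \<in> Xi" "k \<in> kappa_class Zsub" "ennreal (norm (e - \<eta>0)) * kappa_L2 F0 k \<kappa>0 < ennreal \<delta>0"
      unfolding good_def by auto
    with cii show "?thesis e k" by blast
  qed
  have gd_diff: "\<And>e k w \<theta>. good e k \<Longrightarrow> w \<in> space F0 \<Longrightarrow> \<theta> \<in> N \<Longrightarrow> (\<lambda>t. psi m w t e k) differentiable (at \<theta>)"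
    using cii' by blast
  have gd_bnd: "\<And>e k w \<theta>. good e k \<Longrightarrow> w \<in> space F0 \<Longrightarrow> \<theta> \<in> N \<Longrightarrow>
      norm (jacobian (\<lambda>t. psi m w t e k) (at \<theta>) - jacobian (\<lambda>t. psi m w t e k) (at \<theta>0))
                      \<le> d w e k * norm (\<theta> - \<theta>0) powr C1"
    using cii' by blast
  have gd_int: "\<And>e k. good e k \<Longrightarrow> (\<integral>\<^sup>+ w. ennreal (d w e k) \<partial>F0) < ennreal C2"
    using cii' by blast
  obtain r where r: "r > 0" "ball \<theta>0 r \<subseteq> N"
    using N open_contains_ball by blast
  have gd_pos: "\<And>e k w. good e k \<Longrightarrow> w \<in> space F0 \<Longrightarrow> 0 \<le> d w e k"
  proof -
    fix e k w assume g: "good e k" and w: "w \<in> space F0"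
    define \<theta>1 where "\<theta>1 = \<theta>0 + (r/2) *\<^sub>R axis undefined 1"
    have n1: "norm (\<theta>1 - \<theta>0) = r/2" using r by (simp add: \<theta>1_def norm_axis_1)
    then have "\<theta>1 \<in> ball \<theta>0 r" using r by (simp add: dist_norm norm_minus_commute)
    then have "\<theta>1 \<in> N" using r by blast
    from gd_bnd[OF g w this] have "0 \<le> d w e k * norm (\<theta>1 - \<theta>0) powr C1"
      by (meson norm_ge_zero order_trans)
    moreover have "norm (\<theta>1 - \<theta>0) > 0" using n1 r by linarith
    then have "norm (\<theta>1 - \<theta>0) powr C1 > 0" by simp
    ultimately show "0 \<le> d w e k" by (simp add: zero_le_mult_iff)
  qed
  define S where "S n l = {..<n} - I n l" for n l
  have Ifin: "\<And>n l. l < L \<Longrightarrow> finite (I n l)"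
    using folds(1) by (metis UN_I finite_lessThan finite_subset subsetI lessThan_iff)
  have Isub: "\<And>n l. l < L \<Longrightarrow> I n l \<subseteq> {..<n}"
    using folds(1) by blast
  have IS: "\<And>n l. I n l \<inter> S n l = {}" by (auto simp: S_def)
  have Sfin: "\<And>n l. finite (S n l)" by (simp add: S_def)
  define gE where "gE n l = (SOME g. g \<in> measurable (PiM (S n l) (\<lambda>_. F0)) MEta \<and>
            (\<forall>\<omega>\<in>space M. \<eta>hat n l \<omega> = g (\<lambda>i\<in>S n l. W i \<omega>)))" for n l
  define gK where "gK n l = (SOME g. g \<in> measurable (PiM (S n l) (\<lambda>_. F0)) MK \<and>
            (\<forall>\<omega>\<in>space M. \<kappa>hat n l \<omega> = g (\<lambda>i\<in>S n l. W i \<omega>)))" for n l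
  have gE: "gE n l \<in> measurable (PiM (S n l) (\<lambda>_. F0)) MEta \<and>
            (\<forall>\<omega>\<in>space M. \<eta>hat n l \<omega> = gE n l (\<lambda>i\<in>S n l. W i \<omega>))" if "l < L" for n l
    unfolding gE_def S_def by (rule someI_ex[OF \<eta>hat_outside[OF that]])
  have gK: "gK n l \<in> measurable (PiM (S n l) (\<lambda>_. F0)) MK \<and>
            (\<forall>\<omega>\<in>space M. \<kappa>hat n l \<omega> = gK n l (\<lambda>i\<in>S n l. W i \<omega>))" if "l < L" for n l
    unfolding gK_def S_def by (rule someI_ex[OF \<kappa>hat_outside[OF that]])
  define G where "G n l x = (gE n l x, gK n l x)" for n l x
  have Gm: "\<And>n l. l < L \<Longrightarrow> G n l \<in> measurable (PiM (S n l) (\<lambda>_. F0)) (MEta \<Otimes>\<^sub>M MK)"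
    unfolding G_def using gE gK by (simp add: measurable_Pair)
  define xh where "xh n l \<omega> = G n l (\<lambda>i\<in>S n l. W i \<omega>)" for n l \<omega>
  have xh_eq: "\<And>n l \<omega>. l < L \<Longrightarrow> \<omega> \<in> space M \<Longrightarrow> xh n l \<omega> = (\<eta>hat n l \<omega>, \<kappa>hat n l \<omega>)"
    unfolding xh_def G_def using gE gK by simp
  have xhm: "\<And>n l. l < L \<Longrightarrow> xh n l \<in> measurable M (MEta \<Otimes>\<^sub>M MK)"
    unfolding xh_def by (rule measurable_comp[OF measurable_restrict[OF rv] Gm, unfolded comp_def])
  define Jx :: "'y \<times> 'v \<times> 'z \<Rightarrow> 'e \<times> ('j \<Rightarrow> 'z \<Rightarrow> real^'q) \<Rightarrow> real^'d^'q" where "Jx w x = jacobian (\<lambda>t. psi m w t (fst x) (snd x)) (at \<theta>0)" for w x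
  have Jxm: "(\<lambda>(w,x). Jx w x) \<in> borel_measurable (F0 \<Otimes>\<^sub>M (MEta \<Otimes>\<^sub>M MK))"
  proof -
    have "(\<lambda>(w,x). Jx w x) = (\<lambda>(w, e, k). jacobian (\<lambda>t. psi m w t e k) (at \<theta>0))"
      by (rule ext) (auto simp: Jx_def split: prod.splits)
    then show ?thesis using jac_meas[of \<theta>0] by simp
  qed
  define J0 :: "'y \<times> 'v \<times> 'z \<Rightarrow> real^'d^'q" where "J0 w = jacobian (\<lambda>t. psi m w t \<eta>0 \<kappa>0) (at \<theta>0)" for w
  have J0int: "integrable F0 J0" using \<Upsilon>_int unfolding J0_def .
  have J0m: "J0 \<in> borel_measurable F0" using J0int by auto
  define dh :: "'y \<times> 'v \<times> 'z \<Rightarrow> 'e \<times> ('j \<Rightarrow> 'z \<Rightarrow> real^'q) \<Rightarrow> real" where "dh w x = d w (fst x) (snd x)" for w x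
  have dhm: "(\<lambda>(w,x). dh w x) \<in> borel_measurable (F0 \<Otimes>\<^sub>M (MEta \<Otimes>\<^sub>M MK))"
  proof -
    have "(\<lambda>(w,x). dh w x) = (\<lambda>(w, e, k). d w e k)"
      by (rule ext) (auto simp: dh_def split: prod.splits)
    then show ?thesis using dm by simp
  qed
  show ?thesis
    unfolding conv_prob_negl
  proof (intro allI impI)
    fix \<epsilon> :: real assume \<epsilon>: "\<epsilon> > 0"
    define Q where "Q = real CARD('q)"
    define D where "D = real CARD('d)"
    have Q: "Q \<ge> 1" and D: "D \<ge> 1" by (simp_all add: Q_def D_def)
    have Lr: "real L \<ge> 1" using L by simp
    define \<epsilon>1 where "\<epsilon>1 = \<epsilon> / 3"
    define \<epsilon>2 where "\<epsilon>2 = \<epsilon> / (3 * real L * Q * D)"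
    define \<epsilon>3 where "\<epsilon>3 = \<epsilon> / (3 * Q * D)"
    have \<epsilon>pos: "\<epsilon>1 > 0" "\<epsilon>2 > 0" "\<epsilon>3 > 0"
      using \<epsilon> Q D Lr by (simp_all add: \<epsilon>1_def \<epsilon>2_def \<epsilon>3_def)
    define Dsum where "Dsum n \<omega> = (1/real n) * (\<Sum>l<L. \<Sum>i\<in>I n l. d (W i \<omega>) (\<eta>hat n l \<omega>) (\<kappa>hat n l \<omega>))" for n \<omega>
    define pp where "pp n \<omega> = norm (\<theta>bar n \<omega> - \<theta>0) powr C1" for n \<omega>
    define Good where "Good n \<omega> \<longleftrightarrow> \<theta>bar n \<omega> \<in> ball \<theta>0 r \<and> (\<forall>l<L. good (\<eta>hat n l \<omega>) (\<kappa>hat n l \<omega>))" for n \<omega>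
    define Bad1 where "Bad1 n = {\<omega>\<in>space M. r/2 < dist (\<theta>bar n \<omega>) \<theta>0}" for n
    define Bad2 where "Bad2 n = (\<Union>l\<in>{..<L}. {\<omega>\<in>space M. ennreal (\<delta>0/2) < ennreal (norm (\<eta>hat n l \<omega> - \<eta>0)) * kappa_L2 F0 (\<kappa>hat n l \<omega>) \<kappa>0})" for n
    define E1 where "E1 n = {\<omega>\<in>space M. Good n \<omega> \<and> \<epsilon>1 < pp n \<omega> * Dsum n \<omega>}" for n
    define E2 where "E2 n = (\<Union>l\<in>{..<L}. \<Union>s\<in>UNIV. \<Union>k\<in>UNIV. {\<omega>\<in>space M. \<epsilon>2 < (1/real n) *
        (\<Sum>i\<in>I n l. \<bar>Jx (W i \<omega>) (\<eta>hat n l \<omega>, \<kappa>hat n l \<omega>) $ s $ k - J0 (W i \<omega>) $ s $ k\<bar>)})" for n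
    define E3 where "E3 n = (\<Union>s\<in>UNIV. \<Union>k\<in>UNIV. {\<omega>\<in>space M. \<epsilon>3 < \<bar>(1/real n) * (\<Sum>i<n. J0 (W i \<omega>) $ s $ k) - \<Upsilon> $ s $ k\<bar>})" for n
    have N1: "negl M Bad1"
    proof -
      have "r/2 > 0" using r(1) by simp
      then show ?thesis using \<theta>bar unfolding conv_prob_negl Bad1_def by blast
    qed
    have N2: "negl M Bad2"
      unfolding Bad2_def
    proof (rule negl_UN[OF fmM finite_lessThan])
      fix l assume "l \<in> {..<L}"
      then show "negl M (\<lambda>n. {\<omega>\<in>space M. ennreal (\<delta>0/2) < ennreal (norm (\<eta>hat n l \<omega> - \<eta>0)) * kappa_L2 F0 (\<kappa>hat n l \<omega>) \<kappa>0})"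
        using cond_i[of l] \<delta>0 unfolding conv_prob_zero_enn_negl by simp
    qed
    have N3: "negl M E1"
    proof (rule negl_split[OF fmM])
      fix \<delta> :: real assume \<delta>: "\<delta> > 0"
      define K where "K = C2 / \<delta>"
      have K: "K > 0" using C2 \<delta> by (simp add: K_def)
      define \<eta> where "\<eta> = (\<epsilon>1 / K) powr (1 / C1)"
      have \<eta>: "\<eta> > 0" using \<epsilon>pos K by (simp add: \<eta>_def)
      have \<eta>C: "\<eta> powr C1 = \<epsilon>1 / K"
        using \<epsilon>pos K C1 by (simp add: \<eta>_def powr_powr)
      define Fs where "Fs n = {\<omega>\<in>space M. \<eta> < dist (\<theta>bar n \<omega>) \<theta>0}" for n
      have NF: "negl M Fs"
        using \<theta>bar \<eta> unfolding conv_prob_negl Fs_def by blast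
      have dhm': "(\<lambda>(w,x). ennreal (dh w x)) \<in> borel_measurable (F0 \<Otimes>\<^sub>M (MEta \<Otimes>\<^sub>M MK))"
      proof -
        have "(\<lambda>p. dh (fst p) (snd p)) \<in> borel_measurable (F0 \<Otimes>\<^sub>M (MEta \<Otimes>\<^sub>M MK))"
          using dhm by (simp add: case_prod_beta')
        then show ?thesis unfolding case_prod_beta' by measurable
      qed
      define qd where "qd x = (\<integral>\<^sup>+w. ennreal (dh w x) \<partial>F0)" for x
      have qdm[measurable]: "qd \<in> borel_measurable (MEta \<Otimes>\<^sub>M MK)"
        unfolding qd_def by (rule inner_meas[OF F0 dhm'])
      define hh where "hh w x = ennreal (dh w x) * indicator {x. qd x < ennreal C2} x" for w x
      have hhm: "(\<lambda>(w,x). hh w x) \<in> borel_measurable (F0 \<Otimes>\<^sub>M (MEta \<Otimes>\<^sub>M MK))"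
      proof -
        have ind: "(\<lambda>p. indicator {x. qd x < ennreal C2} (snd p) :: ennreal) \<in> borel_measurable (F0 \<Otimes>\<^sub>M (MEta \<Otimes>\<^sub>M MK))"
          by measurable
        have "(\<lambda>p. ennreal (dh (fst p) (snd p))) \<in> borel_measurable (F0 \<Otimes>\<^sub>M (MEta \<Otimes>\<^sub>M MK))"
          using dhm' by (simp add: case_prod_beta')
        with ind show ?thesis unfolding hh_def case_prod_beta' by measurable
      qed
      have hhb: "(\<integral>\<^sup>+w. hh w x \<partial>F0) \<le> ennreal C2" if x: "x \<in> space (MEta \<Otimes>\<^sub>M MK)" for x
      proof -
        have pm: "(\<lambda>w. (w, x)) \<in> measurable F0 (F0 \<Otimes>\<^sub>M (MEta \<Otimes>\<^sub>M MK))"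
          by (rule measurable_Pair[OF measurable_ident_sets[OF refl] measurable_const[OF x]])
        have "(\<lambda>w. ennreal (dh w x)) \<in> borel_measurable F0"
          using measurable_comp[OF pm dhm'] by (simp add: comp_def)
        then have "(\<integral>\<^sup>+w. hh w x \<partial>F0) = qd x * indicator {x. qd x < ennreal C2} x"
          unfolding hh_def qd_def by (rule nn_integral_multc)
        also have "\<dots> \<le> ennreal C2" by (auto simp: indicator_def less_imp_le)
        finally show ?thesis .
      qed
      define Dq where "Dq n \<omega> = ennreal (1 / real n) * (\<Sum>l<L. \<Sum>i\<in>I n l. hh (W i \<omega>) (xh n l \<omega>))" for n \<omega>
      have hcm: "\<And>n l i. l < L \<Longrightarrow> (\<lambda>\<omega>. hh (W i \<omega>) (xh n l \<omega>)) \<in> borel_measurable M"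
        by (rule comp_meas[OF hhm rv xhm])
      have Dqm: "\<And>n. Dq n \<in> borel_measurable M"
      proof -
        fix n
        have "(\<lambda>\<omega>. \<Sum>l<L. \<Sum>i\<in>I n l. hh (W i \<omega>) (xh n l \<omega>)) \<in> borel_measurable M"
          by (intro borel_measurable_sum) (use hcm in auto)
        then show "Dq n \<in> borel_measurable M" unfolding Dq_def by measurable
      qed
      have intDq: "(\<integral>\<^sup>+\<omega>. Dq n \<omega> \<partial>M) \<le> ennreal C2" if n1: "n \<ge> 1" for n
      proof -
        have sm: "\<And>l. l < L \<Longrightarrow> (\<lambda>\<omega>. \<Sum>i\<in>I n l. hh (W i \<omega>) (xh n l \<omega>)) \<in> borel_measurable M"
          by (intro borel_measurable_sum) (use hcm in auto)
        have "(\<integral>\<^sup>+\<omega>. Dq n \<omega> \<partial>M) = ennreal (1 / real n) * (\<integral>\<^sup>+\<omega>. (\<Sum>l<L. \<Sum>i\<in>I n l. hh (W i \<omega>) (xh n l \<omega>)) \<partial>M)"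
          unfolding Dq_def by (intro nn_integral_cmult) (intro borel_measurable_sum, use hcm in auto)
        also have "(\<integral>\<^sup>+\<omega>. (\<Sum>l<L. \<Sum>i\<in>I n l. hh (W i \<omega>) (xh n l \<omega>)) \<partial>M)
            = (\<Sum>l<L. \<integral>\<^sup>+\<omega>. (\<Sum>i\<in>I n l. hh (W i \<omega>) (xh n l \<omega>)) \<partial>M)"
          by (rule nn_integral_sum) (use sm in auto)
        also have "\<dots> \<le> (\<Sum>l<L. ennreal (real (card (I n l)) * C2))"
        proof (rule sum_mono)
          fix l assume "l \<in> {..<L}"
          then have lL': "l < L" by simp
          show "(\<integral>\<^sup>+\<omega>. (\<Sum>i\<in>I n l. hh (W i \<omega>) (xh n l \<omega>)) \<partial>M) \<le> ennreal (real (card (I n l)) * C2)"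
            unfolding xh_def
            by (rule key_sum_bound[OF M F0 iid(1) iid(2) Sfin Ifin[OF lL'] IS Gm[OF lL'] hhm hhb less_imp_le[OF C2]])
        qed
        also have "\<dots> = ennreal ((\<Sum>l<L. real (card (I n l))) * C2)"
          using C2 by (simp add: sum_ennreal sum_distrib_right)
        also have "(\<Sum>l<L. real (card (I n l))) = real n"
          using sum_folds[OF folds(1)[of n] folds(2)[of n], of "\<lambda>_. 1::real"] by simp
        also have "ennreal (1 / real n) * ennreal (real n * C2) = ennreal C2"
          using n1 C2 by (simp add: ennreal_mult'[symmetric])
        finally show ?thesis by (simp add: mult_left_mono)
      qed
      show "\<exists>F. negl M F \<and> eventually (\<lambda>n. \<exists>A\<in>sets M. E1 n \<inter> space M \<subseteq> F n \<union> A \<and> measure M A \<le> \<delta>) sequentially"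
      proof (intro exI conjI)
        show "negl M Fs" by (rule NF)
        show "eventually (\<lambda>n. \<exists>A\<in>sets M. E1 n \<inter> space M \<subseteq> Fs n \<union> A \<and> measure M A \<le> \<delta>) sequentially"
          unfolding eventually_sequentially
        proof (intro exI[of _ 1] allI impI)
          fix n :: nat assume n1: "n \<ge> 1"
          define A where "A = {\<omega>\<in>space M. ennreal K \<le> Dq n \<omega>}"
          have As: "A \<in> sets M" unfolding A_def using Dqm[of n] by measurable
          have "measure M A \<le> C2 / K"
            unfolding A_def by (rule markov_enn[OF fmM Dqm K intDq[OF n1]]) (use C2 in simp)
          also have "C2 / K = \<delta>" using C2 \<delta> by (simp add: K_def)
          finally have mA': "measure M A \<le> \<delta>" .
          have sub: "E1 n \<inter> space M \<subseteq> Fs n \<union> A"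
          proof
            fix \<omega> assume \<omega>: "\<omega> \<in> E1 n \<inter> space M"
            then have \<omega>s: "\<omega> \<in> space M" and G: "Good n \<omega>" and big: "\<epsilon>1 < pp n \<omega> * Dsum n \<omega>"
              by (auto simp: E1_def)
            show "\<omega> \<in> Fs n \<union> A"
            proof (cases "\<omega> \<in> Fs n")
              case False
              then have dle: "dist (\<theta>bar n \<omega>) \<theta>0 \<le> \<eta>" using \<omega>s by (auto simp: Fs_def not_less)
              have pp0: "pp n \<omega> \<ge> 0" by (simp add: pp_def)
              have ppb: "pp n \<omega> \<le> \<epsilon>1 / K"
              proof -
                have "pp n \<omega> = dist (\<theta>bar n \<omega>) \<theta>0 powr C1" by (simp add: pp_def dist_norm)
                also have "\<dots> \<le> \<eta> powr C1" by (rule powr_mono2) (use C1 dle in auto)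
                finally show ?thesis using \<eta>C by simp
              qed
              have gl: "\<And>l. l < L \<Longrightarrow> good (\<eta>hat n l \<omega>) (\<kappa>hat n l \<omega>)" using G by (simp add: Good_def)
              have dpos: "\<And>l i. l < L \<Longrightarrow> 0 \<le> d (W i \<omega>) (\<eta>hat n l \<omega>) (\<kappa>hat n l \<omega>)"
                using gd_pos gl Wsp[OF \<omega>s] by blast
              have Ds0: "Dsum n \<omega> \<ge> 0"
                unfolding Dsum_def by (intro mult_nonneg_nonneg sum_nonneg) (use dpos in auto)
              have DK: "K \<le> Dsum n \<omega>"
              proof (rule ccontr)
                assume "\<not> K \<le> Dsum n \<omega>"
                then have "Dsum n \<omega> \<le> K" by simp
                then have "pp n \<omega> * Dsum n \<omega> \<le> (\<epsilon>1 / K) * K"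
                  by (intro mult_mono ppb) (use Ds0 \<epsilon>pos K in auto)
                then show False using big K by simp
              qed
              have hh_eq: "\<And>l i. l < L \<Longrightarrow> hh (W i \<omega>) (xh n l \<omega>) = ennreal (d (W i \<omega>) (\<eta>hat n l \<omega>) (\<kappa>hat n l \<omega>))"
              proof -
                fix l i assume lL': "l < L"
                have xe: "xh n l \<omega> = (\<eta>hat n l \<omega>, \<kappa>hat n l \<omega>)" using xh_eq[OF lL' \<omega>s] .
                have "qd (xh n l \<omega>) < ennreal C2"
                  unfolding xe qd_def dh_def using gd_int[OF gl[OF lL']] by simp
                then show "hh (W i \<omega>) (xh n l \<omega>) = ennreal (d (W i \<omega>) (\<eta>hat n l \<omega>) (\<kappa>hat n l \<omega>))"
                  unfolding hh_def by (simp add: xe dh_def)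
              qed
              have "Dq n \<omega> = ennreal (1 / real n) * (\<Sum>l<L. \<Sum>i\<in>I n l. ennreal (d (W i \<omega>) (\<eta>hat n l \<omega>) (\<kappa>hat n l \<omega>)))"
                unfolding Dq_def by (simp add: hh_eq)
              also have "\<dots> = ennreal (Dsum n \<omega>)"
              proof -
                have s1: "(\<Sum>i\<in>I n l. ennreal (d (W i \<omega>) (\<eta>hat n l \<omega>) (\<kappa>hat n l \<omega>)))
                    = ennreal (\<Sum>i\<in>I n l. d (W i \<omega>) (\<eta>hat n l \<omega>) (\<kappa>hat n l \<omega>))" if "l < L" for l
                  by (rule sum_ennreal) (use dpos that in auto)
                have s2: "(\<Sum>l<L. ennreal (\<Sum>i\<in>I n l. d (W i \<omega>) (\<eta>hat n l \<omega>) (\<kappa>hat n l \<omega>)))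
                    = ennreal (\<Sum>l<L. \<Sum>i\<in>I n l. d (W i \<omega>) (\<eta>hat n l \<omega>) (\<kappa>hat n l \<omega>))"
                  by (rule sum_ennreal) (use dpos in \<open>auto intro: sum_nonneg\<close>)
                show ?thesis unfolding Dsum_def
                  by (simp add: s1 s2 ennreal_mult'[of "1 / real n", symmetric])
              qed
              finally have "Dq n \<omega> = ennreal (Dsum n \<omega>)" .
              then have "ennreal K \<le> Dq n \<omega>" using DK by (simp add: ennreal_leI)
              then show ?thesis using \<omega>s by (simp add: A_def)
            qed simp
          qed
          show "\<exists>A\<in>sets M. E1 n \<inter> space M \<subseteq> Fs n \<union> A \<and> measure M A \<le> \<delta>"
            using As sub mA' by blast
        qed
      qed
    qed
    have N4: "negl M E2"
      unfolding E2_def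
    proof (rule negl_UN[OF fmM finite_lessThan])
      fix l assume lL: "l \<in> {..<L}"
      then have lL': "l < L" by simp
      show "negl M (\<lambda>n. \<Union>s\<in>UNIV. \<Union>k\<in>UNIV. {\<omega>\<in>space M. \<epsilon>2 < (1/real n) *
        (\<Sum>i\<in>I n l. \<bar>Jx (W i \<omega>) (\<eta>hat n l \<omega>, \<kappa>hat n l \<omega>) $ s $ k - J0 (W i \<omega>) $ s $ k\<bar>)})"
      proof (rule negl_UN[OF fmM finite], rule negl_UN[OF fmM finite])
        fix s :: 'q and k :: 'd
        define \<Delta> where "\<Delta> w x = \<bar>Jx w x $ s $ k - J0 w $ s $ k\<bar>" for w x
        have Jxm': "(\<lambda>p. Jx (fst p) (snd p)) \<in> borel_measurable (F0 \<Otimes>\<^sub>M (MEta \<Otimes>\<^sub>M MK))"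
          using Jxm by (simp add: case_prod_beta')
        have J0m': "(\<lambda>p. J0 (fst p)) \<in> borel_measurable (F0 \<Otimes>\<^sub>M (MEta \<Otimes>\<^sub>M MK))"
          by (rule measurable_comp[OF measurable_fst J0m, unfolded comp_def])
        note vecnth_meas[OF Jxm', measurable] vecnth_meas[OF J0m', measurable]
        have \<Delta>m: "(\<lambda>(w,x). ennreal (\<Delta> w x)) \<in> borel_measurable (F0 \<Otimes>\<^sub>M (MEta \<Otimes>\<^sub>M MK))"
          unfolding \<Delta>_def case_prod_beta' by measurable
        define rq where "rq x = (\<integral>\<^sup>+w. ennreal (\<Delta> w x) \<partial>F0)" for x
        have rqm[measurable]: "rq \<in> borel_measurable (MEta \<Otimes>\<^sub>M MK)"
          unfolding rq_def by (rule inner_meas[OF F0 \<Delta>m])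
        show "negl M (\<lambda>n. {\<omega>\<in>space M. \<epsilon>2 < (1/real n) *
          (\<Sum>i\<in>I n l. \<bar>Jx (W i \<omega>) (\<eta>hat n l \<omega>, \<kappa>hat n l \<omega>) $ s $ k - J0 (W i \<omega>) $ s $ k\<bar>)})"
        proof (rule negl_split[OF fmM])
          fix \<delta> :: real assume \<delta>: "\<delta> > 0"
          define \<gamma> where "\<gamma> = \<epsilon>2 * \<delta>"
          have \<gamma>: "\<gamma> > 0" using \<delta> \<epsilon>pos by (simp add: \<gamma>_def)
          define Fs where "Fs n = {\<omega>\<in>space M. ennreal \<gamma> < rq (\<eta>hat n l \<omega>, \<kappa>hat n l \<omega>)}" for n
          have NF: "negl M Fs"
          proof -
            have "negl M (\<lambda>n. {\<omega>\<in>space M. ennreal \<gamma> < (\<integral>\<^sup>+ w. ennreal \<bar>jacobian (\<lambda>t. psi m w t (\<eta>hat n l \<omega>) (\<kappa>hat n l \<omega>)) (at \<theta>0) $ s $ k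
                                 - jacobian (\<lambda>t. psi m w t \<eta>0 \<kappa>0) (at \<theta>0) $ s $ k\<bar> \<partial>F0)})"
              using cond_iii[OF lL', of s k] \<gamma> unfolding conv_prob_zero_enn_negl by blast
            then show ?thesis unfolding Fs_def rq_def \<Delta>_def Jx_def J0_def by simp
          qed
          define hh where "hh w x = ennreal (\<Delta> w x) * indicator {x. rq x \<le> ennreal \<gamma>} x" for w x
          have hhm: "(\<lambda>(w,x). hh w x) \<in> borel_measurable (F0 \<Otimes>\<^sub>M (MEta \<Otimes>\<^sub>M MK))"
          proof -
            have ind: "(\<lambda>p. indicator {x. rq x \<le> ennreal \<gamma>} (snd p) :: ennreal) \<in> borel_measurable (F0 \<Otimes>\<^sub>M (MEta \<Otimes>\<^sub>M MK))"
              by measurable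
            have "(\<lambda>p. ennreal (\<Delta> (fst p) (snd p))) \<in> borel_measurable (F0 \<Otimes>\<^sub>M (MEta \<Otimes>\<^sub>M MK))"
              using \<Delta>m by (simp add: case_prod_beta')
            with ind show ?thesis unfolding hh_def case_prod_beta' by measurable
          qed
          have hhb: "(\<integral>\<^sup>+w. hh w x \<partial>F0) \<le> ennreal \<gamma>" if x: "x \<in> space (MEta \<Otimes>\<^sub>M MK)" for x
          proof -
            have pm: "(\<lambda>w. (w, x)) \<in> measurable F0 (F0 \<Otimes>\<^sub>M (MEta \<Otimes>\<^sub>M MK))"
              by (rule measurable_Pair[OF measurable_ident_sets[OF refl] measurable_const[OF x]])
            have "(\<lambda>w. ennreal (\<Delta> w x)) \<in> borel_measurable F0"
              using measurable_comp[OF pm \<Delta>m] by (simp add: comp_def)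
            then have "(\<integral>\<^sup>+w. hh w x \<partial>F0) = rq x * indicator {x. rq x \<le> ennreal \<gamma>} x"
              unfolding hh_def rq_def by (rule nn_integral_multc)
            also have "\<dots> \<le> ennreal \<gamma>" by (auto simp: indicator_def)
            finally show ?thesis .
          qed
          define Rq where "Rq n \<omega> = ennreal (1 / real n) * (\<Sum>i\<in>I n l. hh (W i \<omega>) (xh n l \<omega>))" for n \<omega>
          have Rqm: "\<And>n. Rq n \<in> borel_measurable M"
          proof -
            fix n
            have "\<And>i. (\<lambda>\<omega>. hh (W i \<omega>) (xh n l \<omega>)) \<in> borel_measurable M"
              by (rule comp_meas[OF hhm rv xhm[OF lL']])
            then show "Rq n \<in> borel_measurable M" unfolding Rq_def by measurable
          qed
          have intRq: "(\<integral>\<^sup>+\<omega>. Rq n \<omega> \<partial>M) \<le> ennreal \<gamma>" if n1: "n \<ge> 1" for n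
          proof -
            have "\<And>i. (\<lambda>\<omega>. hh (W i \<omega>) (xh n l \<omega>)) \<in> borel_measurable M"
              by (rule comp_meas[OF hhm rv xhm[OF lL']])
            then have "(\<integral>\<^sup>+\<omega>. Rq n \<omega> \<partial>M) = ennreal (1 / real n) * (\<integral>\<^sup>+\<omega>. (\<Sum>i\<in>I n l. hh (W i \<omega>) (xh n l \<omega>)) \<partial>M)"
              unfolding Rq_def by (intro nn_integral_cmult) measurable
            also have "(\<integral>\<^sup>+\<omega>. (\<Sum>i\<in>I n l. hh (W i \<omega>) (xh n l \<omega>)) \<partial>M) \<le> ennreal (real (card (I n l)) * \<gamma>)"
              unfolding xh_def
              by (rule key_sum_bound[OF M F0 iid(1) iid(2) Sfin Ifin[OF lL'] IS Gm[OF lL'] hhm hhb less_imp_le[OF \<gamma>]])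
            also have "ennreal (1 / real n) * ennreal (real (card (I n l)) * \<gamma>) = ennreal (real (card (I n l)) / real n * \<gamma>)"
              using \<gamma> by (simp add: ennreal_mult'[symmetric])
            also have "\<dots> \<le> ennreal \<gamma>"
            proof (rule ennreal_leI)
              have "card (I n l) \<le> n" using card_mono[OF _ Isub[OF lL']] by fastforce
              then have "real (card (I n l)) / real n \<le> 1" using n1 by simp
              then show "real (card (I n l)) / real n * \<gamma> \<le> \<gamma>"
                using \<gamma> mult_right_mono[of "real (card (I n l)) / real n" 1 \<gamma>] by simp
            qed
            finally show ?thesis by (simp add: mult_left_mono)
          qed
          show "\<exists>F. negl M F \<and> eventually (\<lambda>n. \<exists>A\<in>sets M. {\<omega>\<in>space M. \<epsilon>2 < (1/real n) *
              (\<Sum>i\<in>I n l. \<bar>Jx (W i \<omega>) (\<eta>hat n l \<omega>, \<kappa>hat n l \<omega>) $ s $ k - J0 (W i \<omega>) $ s $ k\<bar>)} \<inter> space M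
              \<subseteq> F n \<union> A \<and> measure M A \<le> \<delta>) sequentially"
          proof (intro exI conjI)
            show "negl M Fs" by (rule NF)
            show "eventually (\<lambda>n. \<exists>A\<in>sets M. {\<omega>\<in>space M. \<epsilon>2 < (1/real n) *
              (\<Sum>i\<in>I n l. \<bar>Jx (W i \<omega>) (\<eta>hat n l \<omega>, \<kappa>hat n l \<omega>) $ s $ k - J0 (W i \<omega>) $ s $ k\<bar>)} \<inter> space M
              \<subseteq> Fs n \<union> A \<and> measure M A \<le> \<delta>) sequentially"
              unfolding eventually_sequentially
            proof (intro exI[of _ 1] allI impI)
              fix n :: nat assume n1: "n \<ge> 1"
              define A where "A = {\<omega>\<in>space M. ennreal \<epsilon>2 \<le> Rq n \<omega>}"
              have As: "A \<in> sets M" unfolding A_def using Rqm[of n] by measurable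
              have mA: "measure M A \<le> \<gamma> / \<epsilon>2"
                unfolding A_def by (rule markov_enn[OF fmM Rqm \<epsilon>pos(2) intRq[OF n1]]) (use \<gamma> in simp)
              also have "\<gamma> / \<epsilon>2 = \<delta>" using \<epsilon>pos by (simp add: \<gamma>_def)
              finally have mA': "measure M A \<le> \<delta>" .
              have sub: "{\<omega>\<in>space M. \<epsilon>2 < (1/real n) *
                  (\<Sum>i\<in>I n l. \<bar>Jx (W i \<omega>) (\<eta>hat n l \<omega>, \<kappa>hat n l \<omega>) $ s $ k - J0 (W i \<omega>) $ s $ k\<bar>)} \<inter> space M
                  \<subseteq> Fs n \<union> A"
              proof
                fix \<omega> assume \<omega>: "\<omega> \<in> {\<omega>\<in>space M. \<epsilon>2 < (1/real n) *
                  (\<Sum>i\<in>I n l. \<bar>Jx (W i \<omega>) (\<eta>hat n l \<omega>, \<kappa>hat n l \<omega>) $ s $ k - J0 (W i \<omega>) $ s $ k\<bar>)} \<inter> space M"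
                show "\<omega> \<in> Fs n \<union> A"
                proof (cases "\<omega> \<in> Fs n")
                  case False
                  with \<omega> have rq_le: "rq (\<eta>hat n l \<omega>, \<kappa>hat n l \<omega>) \<le> ennreal \<gamma>"
                    by (auto simp: Fs_def not_less)
                  have xe: "xh n l \<omega> = (\<eta>hat n l \<omega>, \<kappa>hat n l \<omega>)" using xh_eq[OF lL'] \<omega> by blast
                  have "Rq n \<omega> = ennreal (1 / real n) * (\<Sum>i\<in>I n l. ennreal (\<Delta> (W i \<omega>) (\<eta>hat n l \<omega>, \<kappa>hat n l \<omega>)))"
                    unfolding Rq_def hh_def xe using rq_le by simp
                  also have "\<dots> = ennreal ((1/real n) * (\<Sum>i\<in>I n l. \<Delta> (W i \<omega>) (\<eta>hat n l \<omega>, \<kappa>hat n l \<omega>)))"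
                    by (simp add: sum_ennreal \<Delta>_def ennreal_mult'[symmetric] sum_nonneg)
                  finally have "Rq n \<omega> = ennreal ((1/real n) * (\<Sum>i\<in>I n l. \<Delta> (W i \<omega>) (\<eta>hat n l \<omega>, \<kappa>hat n l \<omega>)))" .
                  moreover have "\<epsilon>2 < (1/real n) * (\<Sum>i\<in>I n l. \<Delta> (W i \<omega>) (\<eta>hat n l \<omega>, \<kappa>hat n l \<omega>))"
                    using \<omega> by (simp add: \<Delta>_def)
                  ultimately have "ennreal \<epsilon>2 \<le> Rq n \<omega>" by (simp add: ennreal_leI)
                  then show ?thesis using \<omega> by (simp add: A_def)
                qed simp
              qed
              show "\<exists>A\<in>sets M. {\<omega>\<in>space M. \<epsilon>2 < (1/real n) *
                (\<Sum>i\<in>I n l. \<bar>Jx (W i \<omega>) (\<eta>hat n l \<omega>, \<kappa>hat n l \<omega>) $ s $ k - J0 (W i \<omega>) $ s $ k\<bar>)} \<inter> space M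
                \<subseteq> Fs n \<union> A \<and> measure M A \<le> \<delta>"
                using As sub mA' by blast
            qed
          qed
        qed
      qed
    qed
    have N5: "negl M E3"
      unfolding E3_def
    proof (rule negl_UN[OF fmM finite])
      fix s :: 'q
      show "negl M (\<lambda>n. \<Union>k\<in>UNIV. {\<omega>\<in>space M. \<epsilon>3 < \<bar>(1/real n) * (\<Sum>i<n. J0 (W i \<omega>) $ s $ k) - \<Upsilon> $ s $ k\<bar>})"
      proof (rule negl_UN[OF fmM finite])
        fix k :: 'd
        have blin: "bounded_linear (\<lambda>A::real^'d^'q. A $ s $ k)"
          by (rule bounded_linear_compose[OF bounded_linear_vec_nth bounded_linear_vec_nth])
        have hb: "has_bochner_integral F0 (\<lambda>w. J0 w $ s $ k) (integral\<^sup>L F0 J0 $ s $ k)"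
          by (rule has_bochner_integral_bounded_linear[OF blin has_bochner_integral_integrable[OF J0int]])
        have Ups: "\<Upsilon> = integral\<^sup>L F0 J0" unfolding J0_def[abs_def] by (rule \<Upsilon>_def)
        have intf: "integrable F0 (\<lambda>w. J0 w $ s $ k)" and If: "(\<integral>w. J0 w $ s $ k \<partial>F0) = \<Upsilon> $ s $ k"
          using hb by (auto simp: has_bochner_integral_iff Ups)
        from wlln[OF M F0 iid(1) iid(2) intf \<epsilon>pos(3)]
        show "negl M (\<lambda>n. {\<omega>\<in>space M. \<epsilon>3 < \<bar>(1/real n) * (\<Sum>i<n. J0 (W i \<omega>) $ s $ k) - \<Upsilon> $ s $ k\<bar>})"
          by (simp only: If)
      qed
    qed
    have Nall: "negl M (\<lambda>n. Bad1 n \<union> Bad2 n \<union> E1 n \<union> E2 n \<union> E3 n)"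
      by (intro negl_Un[OF fmM] N1 N2 N3 N4 N5)
    have incl: "{\<omega>\<in>space M. \<epsilon> < dist (jacobian (psi_hat m L (I n) (\<lambda>i. W i \<omega>) (\<lambda>l. \<eta>hat n l \<omega>) (\<lambda>l. \<kappa>hat n l \<omega>) n)
                      (at (\<theta>bar n \<omega>))) \<Upsilon>} \<inter> space M \<subseteq> Bad1 n \<union> Bad2 n \<union> E1 n \<union> E2 n \<union> E3 n"
      if n1: "n \<ge> 1" for n
    proof
      fix \<omega> assume \<omega>: "\<omega> \<in> {\<omega>\<in>space M. \<epsilon> < dist (jacobian (psi_hat m L (I n) (\<lambda>i. W i \<omega>) (\<lambda>l. \<eta>hat n l \<omega>) (\<lambda>l. \<kappa>hat n l \<omega>) n)
                      (at (\<theta>bar n \<omega>))) \<Upsilon>} \<inter> space M"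
      then have \<omega>s: "\<omega> \<in> space M" and big: "\<epsilon> < dist (jacobian (psi_hat m L (I n) (\<lambda>i. W i \<omega>) (\<lambda>l. \<eta>hat n l \<omega>) (\<lambda>l. \<kappa>hat n l \<omega>) n)
                      (at (\<theta>bar n \<omega>))) \<Upsilon>" by auto
      show "\<omega> \<in> Bad1 n \<union> Bad2 n \<union> E1 n \<union> E2 n \<union> E3 n"
      proof (rule ccontr)
        assume nin: "\<omega> \<notin> Bad1 n \<union> Bad2 n \<union> E1 n \<union> E2 n \<union> E3 n"
        have "dist (\<theta>bar n \<omega>) \<theta>0 \<le> r/2" using nin \<omega>s by (auto simp: Bad1_def not_less)
        then have \<theta>ball: "\<theta>bar n \<omega> \<in> ball \<theta>0 r" using r(1) by (simp add: dist_commute)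
        then have \<theta>N: "\<theta>bar n \<omega> \<in> N" using r(2) by blast
        have gl: "good (\<eta>hat n l \<omega>) (\<kappa>hat n l \<omega>)" if lL: "l < L" for l
        proof -
          have "ennreal (norm (\<eta>hat n l \<omega> - \<eta>0)) * kappa_L2 F0 (\<kappa>hat n l \<omega>) \<kappa>0 \<le> ennreal (\<delta>0/2)"
            using nin \<omega>s lL by (auto simp: Bad2_def not_less)
          also have "ennreal (\<delta>0/2) < ennreal \<delta>0" using \<delta>0 by (simp add: ennreal_less_iff)
          finally show ?thesis unfolding good_def using \<eta>hat_vals[OF lL] \<kappa>hat_vals[OF lL] by blast
        qed
        have G: "Good n \<omega>" unfolding Good_def using \<theta>ball gl by blast
        have t1: "pp n \<omega> * Dsum n \<omega> \<le> \<epsilon>1" using nin \<omega>s G by (auto simp: E1_def not_less)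
        have t2: "(1/real n) * (\<Sum>i\<in>I n l. \<bar>Jx (W i \<omega>) (\<eta>hat n l \<omega>, \<kappa>hat n l \<omega>) $ s $ k - J0 (W i \<omega>) $ s $ k\<bar>) \<le> \<epsilon>2"
          if "l < L" for l s k
          using nin \<omega>s that by (auto simp: E2_def not_less)
        have t3: "\<bar>(1/real n) * (\<Sum>i<n. J0 (W i \<omega>) $ s $ k) - \<Upsilon> $ s $ k\<bar> \<le> \<epsilon>3" for s k
          using nin \<omega>s by (auto simp: E3_def not_less)
        define A where "A l i = jacobian (\<lambda>t. psi m (W i \<omega>) t (\<eta>hat n l \<omega>) (\<kappa>hat n l \<omega>)) (at (\<theta>bar n \<omega>))" for l i
        have hd: "((\<lambda>t. psi m (W i \<omega>) t (\<eta>hat n l \<omega>) (\<kappa>hat n l \<omega>)) has_derivative (\<lambda>h. A l i *v h)) (at (\<theta>bar n \<omega>))"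
          if "l < L" for l i
        proof -
          have "(\<lambda>t. psi m (W i \<omega>) t (\<eta>hat n l \<omega>) (\<kappa>hat n l \<omega>)) differentiable (at (\<theta>bar n \<omega>))"
            by (rule gd_diff[OF gl[OF that] Wsp[OF \<omega>s] \<theta>N])
          then show ?thesis unfolding A_def jacobian_works .
        qed
        have ph: "psi_hat m L (I n) (\<lambda>i. W i \<omega>) (\<lambda>l. \<eta>hat n l \<omega>) (\<lambda>l. \<kappa>hat n l \<omega>) n
            = (\<lambda>t. (1 / real n) *\<^sub>R (\<Sum>l<L. \<Sum>i\<in>I n l. psi m (W i \<omega>) t (\<eta>hat n l \<omega>) (\<kappa>hat n l \<omega>)))"
          by (rule ext) (simp add: psi_hat_def)
        have hdall: "((\<lambda>t. (1 / real n) *\<^sub>R (\<Sum>l<L. \<Sum>i\<in>I n l. psi m (W i \<omega>) t (\<eta>hat n l \<omega>) (\<kappa>hat n l \<omega>)))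
            has_derivative (\<lambda>h. ((1 / real n) *\<^sub>R (\<Sum>l<L. \<Sum>i\<in>I n l. A l i)) *v h)) (at (\<theta>bar n \<omega>))"
        proof (rule has_derivative_scale_mat, rule has_derivative_sum_mat[OF finite_lessThan])
          fix l assume "l \<in> {..<L}"
          then have lL: "l < L" by simp
          show "((\<lambda>t. \<Sum>i\<in>I n l. psi m (W i \<omega>) t (\<eta>hat n l \<omega>) (\<kappa>hat n l \<omega>)) has_derivative (\<lambda>h. (\<Sum>i\<in>I n l. A l i) *v h)) (at (\<theta>bar n \<omega>))"
            by (rule has_derivative_sum_mat[OF Ifin[OF lL]]) (rule hd[OF lL])
        qed
        have Jh: "jacobian (psi_hat m L (I n) (\<lambda>i. W i \<omega>) (\<lambda>l. \<eta>hat n l \<omega>) (\<lambda>l. \<kappa>hat n l \<omega>) n) (at (\<theta>bar n \<omega>))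
            = (1 / real n) *\<^sub>R (\<Sum>l<L. \<Sum>i\<in>I n l. A l i)"
          unfolding ph by (rule jac_of[OF hdall])
        have bnd: "norm (A l i - Jx (W i \<omega>) (\<eta>hat n l \<omega>, \<kappa>hat n l \<omega>)) \<le> d (W i \<omega>) (\<eta>hat n l \<omega>) (\<kappa>hat n l \<omega>) * pp n \<omega>"
          if "l < L" "i \<in> I n l" for l i
          unfolding A_def Jx_def pp_def using gd_bnd[OF gl[OF that(1)] Wsp[OF \<omega>s] \<theta>N] by simp
        have n0: "n > 0" using n1 by simp
        have db: "norm ((1/real n) *\<^sub>R (\<Sum>l<L. \<Sum>i\<in>I n l. A l i) - \<Upsilon>)
           \<le> pp n \<omega> * ((1/real n) * (\<Sum>l<L. \<Sum>i\<in>I n l. d (W i \<omega>) (\<eta>hat n l \<omega>) (\<kappa>hat n l \<omega>)))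
             + (\<Sum>l<L. \<Sum>s\<in>UNIV. \<Sum>k\<in>UNIV. (1/real n) * (\<Sum>i\<in>I n l. \<bar>Jx (W i \<omega>) (\<eta>hat n l \<omega>, \<kappa>hat n l \<omega>) $ s $ k - J0 (W i \<omega>) $ s $ k\<bar>))
             + (\<Sum>s\<in>UNIV. \<Sum>k\<in>UNIV. \<bar>(1/real n) * (\<Sum>i<n. J0 (W i \<omega>) $ s $ k) - \<Upsilon> $ s $ k\<bar>)"
          by (rule decomp_bound[OF folds(1)[of n] folds(2)[of n] n0 bnd])
        have s1: "pp n \<omega> * ((1/real n) * (\<Sum>l<L. \<Sum>i\<in>I n l. d (W i \<omega>) (\<eta>hat n l \<omega>) (\<kappa>hat n l \<omega>))) \<le> \<epsilon>1"
          using t1 by (simp add: Dsum_def)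
        have s2: "(\<Sum>l<L. \<Sum>s\<in>UNIV. \<Sum>k\<in>UNIV. (1/real n) * (\<Sum>i\<in>I n l. \<bar>Jx (W i \<omega>) (\<eta>hat n l \<omega>, \<kappa>hat n l \<omega>) $ s $ k - J0 (W i \<omega>) $ s $ k\<bar>))
            \<le> (\<Sum>l<L. \<Sum>s\<in>(UNIV::'q set). \<Sum>k\<in>(UNIV::'d set). \<epsilon>2)"
          by (intro sum_mono t2) simp
        have s2': "(\<Sum>l<L. \<Sum>s\<in>(UNIV::'q set). \<Sum>k\<in>(UNIV::'d set). \<epsilon>2) = \<epsilon> / 3"
          using Q D Lr by (simp add: \<epsilon>2_def Q_def D_def)
        have s3: "(\<Sum>s\<in>UNIV. \<Sum>k\<in>UNIV. \<bar>(1/real n) * (\<Sum>i<n. J0 (W i \<omega>) $ s $ k) - \<Upsilon> $ s $ k\<bar>)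
            \<le> (\<Sum>s\<in>(UNIV::'q set). \<Sum>k\<in>(UNIV::'d set). \<epsilon>3)"
          by (intro sum_mono t3)
        have s3': "(\<Sum>s\<in>(UNIV::'q set). \<Sum>k\<in>(UNIV::'d set). \<epsilon>3) = \<epsilon> / 3"
          using Q D by (simp add: \<epsilon>3_def Q_def D_def)
        have "dist (jacobian (psi_hat m L (I n) (\<lambda>i. W i \<omega>) (\<lambda>l. \<eta>hat n l \<omega>) (\<lambda>l. \<kappa>hat n l \<omega>) n)
                      (at (\<theta>bar n \<omega>))) \<Upsilon> \<le> \<epsilon>"
          unfolding Jh dist_norm using db s1 s2 s2' s3 s3' unfolding \<epsilon>1_def by linarith
        then show False using big by simp
      qed
    qed
    show "negl M (\<lambda>n. {\<omega>\<in>space M. \<epsilon> < dist (jacobian (psi_hat m L (I n) (\<lambda>i. W i \<omega>) (\<lambda>l. \<eta>hat n l \<omega>) (\<lambda>l. \<kappa>hat n l \<omega>) n)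
                      (at (\<theta>bar n \<omega>))) \<Upsilon>})"
    proof (rule negl_mono[OF Nall])
      show "eventually (\<lambda>n. {\<omega>\<in>space M. \<epsilon> < dist (jacobian (psi_hat m L (I n) (\<lambda>i. W i \<omega>) (\<lambda>l. \<eta>hat n l \<omega>) (\<lambda>l. \<kappa>hat n l \<omega>) n)
                      (at (\<theta>bar n \<omega>))) \<Upsilon>} \<inter> space M \<subseteq> Bad1 n \<union> Bad2 n \<union> E1 n \<union> E2 n \<union> E3 n) sequentially"
        unfolding eventually_sequentially using incl by blast
    qed
  qed
qed

end
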